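(* Let $\mathcal C,\mathcal D$ be 2-categories. Let $L:\mathcal C\boxtimes_{\mathrm{sim}}\mathcal D\to\mathcal C\times\mathcal D$ be the strict 2-functor with $L(C;D)=(C,D)$, $L(n,p,r;m,q,s)=(\circ p,\circ q)$ (the composites $(p)_n\circ\dots\circ(p)_1$ and $(q)_m\circ\dots\circ(q)_1$), and $L(\xi,\alpha;\rho,\beta)=(\alpha_{\bar n}\circ\dots\circ\alpha_1,\ \beta_{\bar m}\circ\dots\circ\beta_1)$. Let $R:\mathcal C\times\mathcal D\to\mathcal C\boxtimes_{\mathrm{sim}}\mathcal D$ be the lax functor with $R(C,D)=(C;D)$, $R(c,d)=$ the 1-cell "first $d$, then $c$", i.e. $(1,(c),r_0;1,(d),s_0)$ with $r_0=(0,0,1)$, $s_0=(0,1,1)$ as maps $[2]\to[1]$, $R(\gamma,\delta)=(\mathrm{id}_{[1]},(\gamma);\mathrm{id}_{[1]},(\delta))$, unit comparison at $(C,D)$ the unique 2-cell from the identity to $R(1_C,1_D)$ with identity icon components, and composition comparison $R(c',d')\circ R(c,d)\Rightarrow R(c'\circ c,d'\circ d)$ the 2-cell $(\partial,(1_{c'\circ c});\partial,(1_{d'\circ d}))$ with $\partial:[1]\to[2]$, $0\mapsto0$, $1\mapsto2$. Then $L\circ R=1_{\mathcal C\times\mathcal D}$, and the family of 2-cells $\eta_{(n,p,r;m,q,s)}=(!_{[1]\to[n]},(1_{\circ p});!_{[1]\to[m]},(1_{\circ q})):(n,p,r;m,q,s)\Rightarrow R L(n,p,r;m,q,s)$ (where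 $!_{[1]\to[k]}$ sends $0\mapsto0$, $1\mapsto k$) is an icon $\eta:1\Rightarrow R\circ L$ exhibiting $L\dashv R$ (with identity counit) in the 2-category of 2-categories, lax functors and icons.
   Context: All 2-categories are strict and small. An icon between lax functors $F,G:\mathcal X\to\mathcal Y$ that agree on objects is a family of 2-cells $\theta_x:Fx\Rightarrow Gx$, one for each 1-cell $x$, natural in 2-cells of $\mathcal X$ and compatible with the unit and composition comparisons; 2-categories, lax functors and icons form a 2-category. $[n]=\{0<\dots<n\}$ as a category; $\Delta_{\bot\top}$ has objects $[n]$ and morphisms order-preserving maps preserving first and last element. A path of length $n$ in $\mathcal C$ is a 2-functor $p:[n]\to\mathcal C$, with components $(p)_i=p(i-1\to i)$. For $\xi:[\bar n]\to[n]$ in $\Delta_{\bot\top}$, an icon $\alpha:p\circ\xi\Rightarrow\bar p$ is a family of 2-cells $\alpha_i:(p)_{\xi(i)}\circ\dots\circ(p)_{\xi(i-1)+1}\Rightarrow(\bar p)_i$, $i=1..\bar n$ (source an identity if $\xi(i-1)=\xi(i)$). A shuffle of $n,m$ is a pair $r:[n+m]\to[n]$, $s:[n+m]\to[m]$ in $\Delta_{\bot\top}$ such that at each step exactly one of $r,s$ increases by $1$ and the other stays constant. $\mathcal C\boxtimes_{\mathrm{sim}}\mathcal D$: objects pairs $(C;D)$; 1-cells sextuples $(n,p,r;m,q,s)$ with $p$ a path of length $n$ in $\mathcal C$, $q$ a path of length $m$ in $\mathcal D$, $(r,s)$ a shuffle, composed by concatenation (identity: $(0,C,\mathrm{id};0,D,\mathrm{id})$);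 2-cells $(n,p,r;m,q,s)\Rightarrow(\bar n,\bar p,\bar r;\bar m,\bar q,\bar s)$ are $(\xi,\alpha;\rho,\beta)$ with $\xi:[\bar n]\to[n]$, $\rho:[\bar m]\to[m]$ in $\Delta_{\bot\top}$ satisfying $\min r^{-1}(\xi(\bar r(\bar i)))\le\max s^{-1}(\rho(\bar s(\bar i)))$ for all $\bar i\in\{0,\dots,\bar n+\bar m\}$, and icons $\alpha:p\circ\xi\Rightarrow\bar p$, $\beta:q\circ\rho\Rightarrow\bar q$; vertical composite of $(\xi,\alpha;\rho,\beta)$ then $(\bar\xi,\bar\alpha;\bar\rho,\bar\beta)$ is $(\xi\circ\bar\xi,\bar\alpha\bullet(\alpha\bar\xi);\rho\circ\bar\rho,\bar\beta\bullet(\beta\bar\rho))$ with $(\alpha\bar\xi)_i=\alpha_{\bar\xi(i)}\circ\dots\circ\alpha_{\bar\xi(i-1)+1}$; horizontal composition is concatenation. *)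

theory Defs
  imports Main
begin

text \<open>Conventions: cmp g f is the composite "first f then g";
  vc b a is the vertical composite "first a then b";
  hc b a is the horizontal composite "first a then b" (a, b horizontally composable).\<close>

record ('o,'a,'b) tcat =
  Ob   :: "'o set"
  Ar   :: "'a set"
  dom1 :: "'a \<Rightarrow> 'o"
  cod1 :: "'a \<Rightarrow> 'o"
  idn  :: "'o \<Rightarrow> 'a"
  cmp  :: "'a \<Rightarrow> 'a \<Rightarrow> 'a"
  Cl   :: "'b set"
  src2 :: "'b \<Rightarrow> 'a"
  tgt2 :: "'b \<Rightarrow> 'a"
  id2  :: "'a \<Rightarrow> 'b"
  vc   :: "'b \<Rightarrow> 'b \<Rightarrow> 'b"
  hc   :: "'b \<Rightarrow> 'b \<Rightarrow> 'b"

definition twocat :: "('o,'a,'b) tcat \<Rightarrow> bool" where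
  "twocat C \<longleftrightarrow>
    (\<forall>f\<in>Ar C. dom1 C f \<in> Ob C \<and> cod1 C f \<in> Ob C) \<and>
    (\<forall>x\<in>Ob C. idn C x \<in> Ar C \<and> dom1 C (idn C x) = x \<and> cod1 C (idn C x) = x) \<and>
    (\<forall>f\<in>Ar C. \<forall>g\<in>Ar C. cod1 C f = dom1 C g \<longrightarrow>
        cmp C g f \<in> Ar C \<and> dom1 C (cmp C g f) = dom1 C f \<and> cod1 C (cmp C g f) = cod1 C g) \<and>
    (\<forall>f\<in>Ar C. cmp C f (idn C (dom1 C f)) = f \<and> cmp C (idn C (cod1 C f)) f = f) \<and>
    (\<forall>f\<in>Ar C. \<forall>g\<in>Ar C. \<forall>h\<in>Ar C. cod1 C f = dom1 C g \<longrightarrow> cod1 C g = dom1 C h \<longrightarrow>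
        cmp C h (cmp C g f) = cmp C (cmp C h g) f) \<and>
    (\<forall>a\<in>Cl C. src2 C a \<in> Ar C \<and> tgt2 C a \<in> Ar C \<and>
        dom1 C (src2 C a) = dom1 C (tgt2 C a) \<and> cod1 C (src2 C a) = cod1 C (tgt2 C a)) \<and>
    (\<forall>f\<in>Ar C. id2 C f \<in> Cl C \<and> src2 C (id2 C f) = f \<and> tgt2 C (id2 C f) = f) \<and>
    (\<forall>a\<in>Cl C. \<forall>b\<in>Cl C. tgt2 C a = src2 C b \<longrightarrow>
        vc C b a \<in> Cl C \<and> src2 C (vc C b a) = src2 C a \<and> tgt2 C (vc C b a) = tgt2 C b) \<and>
    (\<forall>a\<in>Cl C. vc C a (id2 C (src2 C a)) = a \<and> vc C (id2 C (tgt2 C a)) a = a) \<and>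
    (\<forall>a\<in>Cl C. \<forall>b\<in>Cl C. \<forall>c\<in>Cl C. tgt2 C a = src2 C b \<longrightarrow> tgt2 C b = src2 C c \<longrightarrow>
        vc C c (vc C b a) = vc C (vc C c b) a) \<and>
    (\<forall>a\<in>Cl C. \<forall>b\<in>Cl C. cod1 C (src2 C a) = dom1 C (src2 C b) \<longrightarrow>
        hc C b a \<in> Cl C \<and> src2 C (hc C b a) = cmp C (src2 C b) (src2 C a) \<and>
        tgt2 C (hc C b a) = cmp C (tgt2 C b) (tgt2 C a)) \<and>
    (\<forall>a\<in>Cl C. hc C a (id2 C (idn C (dom1 C (src2 C a)))) = a \<and>
        hc C (id2 C (idn C (cod1 C (src2 C a)))) a = a) \<and>
    (\<forall>a\<in>Cl C. \<forall>b\<in>Cl C. \<forall>c\<in>Cl C. cod1 C (src2 C a) = dom1 C (src2 C b) \<longrightarrow>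
        cod1 C (src2 C b) = dom1 C (src2 C c) \<longrightarrow> hc C c (hc C b a) = hc C (hc C c b) a) \<and>
    (\<forall>f\<in>Ar C. \<forall>g\<in>Ar C. cod1 C f = dom1 C g \<longrightarrow>
        id2 C (cmp C g f) = hc C (id2 C g) (id2 C f)) \<and>
    (\<forall>a\<in>Cl C. \<forall>a'\<in>Cl C. \<forall>b\<in>Cl C. \<forall>b'\<in>Cl C.
        tgt2 C a = src2 C a' \<longrightarrow> tgt2 C b = src2 C b' \<longrightarrow> cod1 C (src2 C a) = dom1 C (src2 C b) \<longrightarrow>
        hc C (vc C b' b) (vc C a' a) = vc C (hc C b' a') (hc C b a))"

definition prodcat :: "('o1,'a1,'b1) tcat \<Rightarrow> ('o2,'a2,'b2) tcat \<Rightarrow>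
    ('o1 \<times> 'o2, 'a1 \<times> 'a2, 'b1 \<times> 'b2) tcat" where
  "prodcat C D = \<lparr> Ob = Ob C \<times> Ob D, Ar = Ar C \<times> Ar D,
     dom1 = (\<lambda>(c,d). (dom1 C c, dom1 D d)), cod1 = (\<lambda>(c,d). (cod1 C c, cod1 D d)),
     idn = (\<lambda>(x,y). (idn C x, idn D y)),
     cmp = (\<lambda>(c',d') (c,d). (cmp C c' c, cmp D d' d)),
     Cl = Cl C \<times> Cl D,
     src2 = (\<lambda>(a,b). (src2 C a, src2 D b)), tgt2 = (\<lambda>(a,b). (tgt2 C a, tgt2 D b)),
     id2 = (\<lambda>(c,d). (id2 C c, id2 D d)),
     vc = (\<lambda>(a',b') (a,b). (vc C a' a, vc D b' b)),
     hc = (\<lambda>(a',b') (a,b). (hc C a' a, hc D b' b)) \<rparr>"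

text \<open>A path of length n in C (a 2-functor [n] \<rightarrow> C) is represented by its starting
  object together with the list of its n components (p)_1, ..., (p)_n.\<close>

type_synonym ('o,'a) path = "'o \<times> 'a list"

definition is_path :: "('o,'a,'b) tcat \<Rightarrow> nat \<Rightarrow> ('o,'a) path \<Rightarrow> bool" where
  "is_path C n p \<longleftrightarrow> fst p \<in> Ob C \<and> length (snd p) = n \<and> set (snd p) \<subseteq> Ar C \<and>
     (0 < n \<longrightarrow> dom1 C (snd p ! 0) = fst p) \<and>
     (\<forall>i. Suc i < n \<longrightarrow> cod1 C (snd p ! i) = dom1 C (snd p ! Suc i))"

definition pobj :: "('o,'a,'b) tcat \<Rightarrow> ('o,'a) path \<Rightarrow> nat \<Rightarrow> 'o" where
  "pobj C p j = (if j = 0 then fst p else cod1 C (snd p ! (j - 1)))"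

text \<open>The composite (p)_k o ... o (p)_(j+1) (the identity at p(j) if j = k).\<close>
definition pseg :: "('o,'a,'b) tcat \<Rightarrow> ('o,'a) path \<Rightarrow> nat \<Rightarrow> nat \<Rightarrow> 'a" where
  "pseg C p j k = foldl (\<lambda>acc f. cmp C f acc) (idn C (pobj C p j)) (take (k - j) (drop j (snd p)))"

definition pcomp :: "('o,'a,'b) tcat \<Rightarrow> ('o,'a) path \<Rightarrow> 'a" where
  "pcomp C p = pseg C p 0 (length (snd p))"

text \<open>Horizontal composite a_k o ... o a_(j+1) of a list of 2-cells
  (identity 2-cell of the identity 1-cell at x if j = k).\<close>
definition hseg :: "('o,'a,'b) tcat \<Rightarrow> 'b list \<Rightarrow> 'o \<Rightarrow> nat \<Rightarrow> nat \<Rightarrow> 'b" where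
  "hseg C as x j k = foldl (\<lambda>acc a. hc C a acc) (id2 C (idn C x)) (take (k - j) (drop j as))"

section \<open>The category Delta_{bot top} and shuffles\<close>

text \<open>A morphism [a] \<rightarrow> [b] in Delta_{bot top}, represented by the list of its values.\<close>
definition is_dmap :: "nat \<Rightarrow> nat \<Rightarrow> nat list \<Rightarrow> bool" where
  "is_dmap a b xs \<longleftrightarrow> length xs = Suc a \<and> sorted xs \<and> xs ! 0 = 0 \<and> xs ! a = b"

definition shuffle :: "nat \<Rightarrow> nat \<Rightarrow> nat list \<Rightarrow> nat list \<Rightarrow> bool" where
  "shuffle n m r s \<longleftrightarrow> is_dmap (n + m) n r \<and> is_dmap (n + m) m s \<and>
     (\<forall>i < n + m. (r ! Suc i = Suc (r ! i) \<and> s ! Suc i = s ! i) \<or>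
                  (r ! Suc i = r ! i \<and> s ! Suc i = Suc (s ! i)))"

definition preim :: "nat list \<Rightarrow> nat \<Rightarrow> nat set" where
  "preim r k = {i. i < length r \<and> r ! i = k}"

section \<open>The 2-category C boxtimes_sim D\<close>

type_synonym ('o1,'a1,'o2,'a2) sarr =
  "nat \<times> ('o1,'a1) path \<times> nat list \<times> nat \<times> ('o2,'a2) path \<times> nat list"

text \<open>2-cells: source 1-cell, target 1-cell, xi, alpha (list of components alpha_1..alpha_nbar),
  rho, beta.\<close>
type_synonym ('o1,'a1,'b1,'o2,'a2,'b2) scell =
  "('o1,'a1,'o2,'a2) sarr \<times> ('o1,'a1,'o2,'a2) sarr \<times> nat list \<times> 'b1 list \<times> nat list \<times> 'b2 list"

definition a_n :: "('o1,'a1,'o2,'a2) sarr \<Rightarrow> nat" where "a_n f = fst f"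
definition a_p :: "('o1,'a1,'o2,'a2) sarr \<Rightarrow> ('o1,'a1) path" where "a_p f = fst (snd f)"
definition a_r :: "('o1,'a1,'o2,'a2) sarr \<Rightarrow> nat list" where "a_r f = fst (snd (snd f))"
definition a_m :: "('o1,'a1,'o2,'a2) sarr \<Rightarrow> nat" where "a_m f = fst (snd (snd (snd f)))"
definition a_q :: "('o1,'a1,'o2,'a2) sarr \<Rightarrow> ('o2,'a2) path" where
  "a_q f = fst (snd (snd (snd (snd f))))"
definition a_s :: "('o1,'a1,'o2,'a2) sarr \<Rightarrow> nat list" where
  "a_s f = snd (snd (snd (snd (snd f))))"

definition c_src :: "('o1,'a1,'b1,'o2,'a2,'b2) scell \<Rightarrow> ('o1,'a1,'o2,'a2) sarr" where
  "c_src a = fst a"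
definition c_tgt :: "('o1,'a1,'b1,'o2,'a2,'b2) scell \<Rightarrow> ('o1,'a1,'o2,'a2) sarr" where
  "c_tgt a = fst (snd a)"
definition c_xi :: "('o1,'a1,'b1,'o2,'a2,'b2) scell \<Rightarrow> nat list" where
  "c_xi a = fst (snd (snd a))"
definition c_al :: "('o1,'a1,'b1,'o2,'a2,'b2) scell \<Rightarrow> 'b1 list" where
  "c_al a = fst (snd (snd (snd a)))"
definition c_rho :: "('o1,'a1,'b1,'o2,'a2,'b2) scell \<Rightarrow> nat list" where
  "c_rho a = fst (snd (snd (snd (snd a))))"
definition c_be :: "('o1,'a1,'b1,'o2,'a2,'b2) scell \<Rightarrow> 'b2 list" where
  "c_be a = snd (snd (snd (snd (snd a))))"

definition sim_arr :: "('o1,'a1,'b1) tcat \<Rightarrow> ('o2,'a2,'b2) tcat \<Rightarrow> ('o1,'a1,'o2,'a2) sarr set" where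
  "sim_arr C D = {f. is_path C (a_n f) (a_p f) \<and> is_path D (a_m f) (a_q f) \<and>
                     shuffle (a_n f) (a_m f) (a_r f) (a_s f)}"

definition sim_dom :: "('o1,'a1,'b1) tcat \<Rightarrow> ('o2,'a2,'b2) tcat \<Rightarrow> ('o1,'a1,'o2,'a2) sarr \<Rightarrow> 'o1 \<times> 'o2" where
  "sim_dom C D f = (fst (a_p f), fst (a_q f))"

definition sim_cod :: "('o1,'a1,'b1) tcat \<Rightarrow> ('o2,'a2,'b2) tcat \<Rightarrow> ('o1,'a1,'o2,'a2) sarr \<Rightarrow> 'o1 \<times> 'o2" where
  "sim_cod C D f = (pobj C (a_p f) (a_n f), pobj D (a_q f) (a_m f))"

definition sim_idn :: "'o1 \<times> 'o2 \<Rightarrow> ('o1,'a1,'o2,'a2) sarr" where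
  "sim_idn x = (0, (fst x, []), [0], 0, (snd x, []), [0])"

text \<open>sim_cmp g f: first f, then g (concatenation).\<close>
definition sim_cmp :: "('o1,'a1,'o2,'a2) sarr \<Rightarrow> ('o1,'a1,'o2,'a2) sarr \<Rightarrow> ('o1,'a1,'o2,'a2) sarr" where
  "sim_cmp g f = (a_n f + a_n g, (fst (a_p f), snd (a_p f) @ snd (a_p g)),
                  a_r f @ map (\<lambda>i. i + a_n f) (tl (a_r g)),
                  a_m f + a_m g, (fst (a_q f), snd (a_q f) @ snd (a_q g)),
                  a_s f @ map (\<lambda>i. i + a_m f) (tl (a_s g)))"

text \<open>alpha is an icon p o xi => pbar (xi : [nbar] \<rightarrow> [n]).\<close>
definition icon_path :: "('o,'a,'b) tcat \<Rightarrow> ('o,'a) path \<Rightarrow> nat list \<Rightarrow> 'b list \<Rightarrow> ('o,'a) path \<Rightarrow> bool" where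
  "icon_path C p xi al pb \<longleftrightarrow> length al = length (snd pb) \<and>
     (\<forall>i \<le> length (snd pb). pobj C p (xi ! i) = pobj C pb i) \<and>
     (\<forall>i \<in> {1..length (snd pb)}. al ! (i - 1) \<in> Cl C \<and>
         src2 C (al ! (i - 1)) = pseg C p (xi ! (i - 1)) (xi ! i) \<and>
         tgt2 C (al ! (i - 1)) = snd pb ! (i - 1))"

definition sim_cell :: "('o1,'a1,'b1) tcat \<Rightarrow> ('o2,'a2,'b2) tcat \<Rightarrow>
    ('o1,'a1,'b1,'o2,'a2,'b2) scell set" where
  "sim_cell C D = {a. c_src a \<in> sim_arr C D \<and> c_tgt a \<in> sim_arr C D \<and>
      sim_dom C D (c_src a) = sim_dom C D (c_tgt a) \<and> sim_cod C D (c_src a) = sim_cod C D (c_tgt a) \<and>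
      is_dmap (a_n (c_tgt a)) (a_n (c_src a)) (c_xi a) \<and>
      is_dmap (a_m (c_tgt a)) (a_m (c_src a)) (c_rho a) \<and>
      (\<forall>i \<le> a_n (c_tgt a) + a_m (c_tgt a).
          Min (preim (a_r (c_src a)) (c_xi a ! (a_r (c_tgt a) ! i)))
            \<le> Max (preim (a_s (c_src a)) (c_rho a ! (a_s (c_tgt a) ! i)))) \<and>
      icon_path C (a_p (c_src a)) (c_xi a) (c_al a) (a_p (c_tgt a)) \<and>
      icon_path D (a_q (c_src a)) (c_rho a) (c_be a) (a_q (c_tgt a))}"

definition sim_id2 :: "('o1,'a1,'b1) tcat \<Rightarrow> ('o2,'a2,'b2) tcat \<Rightarrow>
    ('o1,'a1,'o2,'a2) sarr \<Rightarrow> ('o1,'a1,'b1,'o2,'a2,'b2) scell" where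
  "sim_id2 C D f = (f, f, [0..<Suc (a_n f)], map (id2 C) (snd (a_p f)),
                    [0..<Suc (a_m f)], map (id2 D) (snd (a_q f)))"

text \<open>sim_vc C D b a: first a, then b.  Components
  (bar alpha) bullet (alpha bar xi), with (alpha bar xi)_i = alpha_{bar xi(i)} o ... o alpha_{bar xi(i-1)+1}.\<close>
definition sim_vc :: "('o1,'a1,'b1) tcat \<Rightarrow> ('o2,'a2,'b2) tcat \<Rightarrow>
    ('o1,'a1,'b1,'o2,'a2,'b2) scell \<Rightarrow> ('o1,'a1,'b1,'o2,'a2,'b2) scell \<Rightarrow> ('o1,'a1,'b1,'o2,'a2,'b2) scell" where
  "sim_vc C D b a = (c_src a, c_tgt b, map (\<lambda>i. c_xi a ! i) (c_xi b),
     map (\<lambda>i. vc C (c_al b ! (i - 1))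
                  (hseg C (c_al a) (pobj C (a_p (c_tgt a)) (c_xi b ! (i - 1))) (c_xi b ! (i - 1)) (c_xi b ! i)))
         [1..<Suc (a_n (c_tgt b))],
     map (\<lambda>i. c_rho a ! i) (c_rho b),
     map (\<lambda>i. vc D (c_be b ! (i - 1))
                  (hseg D (c_be a) (pobj D (a_q (c_tgt a)) (c_rho b ! (i - 1))) (c_rho b ! (i - 1)) (c_rho b ! i)))
         [1..<Suc (a_m (c_tgt b))])"

text \<open>sim_hc b a: first a, then b (concatenation).\<close>
definition sim_hc :: "('o1,'a1,'b1,'o2,'a2,'b2) scell \<Rightarrow> ('o1,'a1,'b1,'o2,'a2,'b2) scell \<Rightarrow> ('o1,'a1,'b1,'o2,'a2,'b2) scell" where
  "sim_hc b a = (sim_cmp (c_src b) (c_src a), sim_cmp (c_tgt b) (c_tgt a),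
     c_xi a @ map (\<lambda>i. i + a_n (c_src a)) (tl (c_xi b)), c_al a @ c_al b,
     c_rho a @ map (\<lambda>i. i + a_m (c_src a)) (tl (c_rho b)), c_be a @ c_be b)"

definition simcat :: "('o1,'a1,'b1) tcat \<Rightarrow> ('o2,'a2,'b2) tcat \<Rightarrow>
    ('o1 \<times> 'o2, ('o1,'a1,'o2,'a2) sarr, ('o1,'a1,'b1,'o2,'a2,'b2) scell) tcat" where
  "simcat C D = \<lparr> Ob = Ob C \<times> Ob D, Ar = sim_arr C D, dom1 = sim_dom C D, cod1 = sim_cod C D,
     idn = sim_idn, cmp = sim_cmp, Cl = sim_cell C D, src2 = c_src, tgt2 = c_tgt,
     id2 = sim_id2 C D, vc = sim_vc C D, hc = sim_hc \<rparr>"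

record ('o1,'a1,'b1,'o2,'a2,'b2) lfun =
  fob   :: "'o1 \<Rightarrow> 'o2"
  far   :: "'a1 \<Rightarrow> 'a2"
  fcl   :: "'b1 \<Rightarrow> 'b2"
  funit :: "'o1 \<Rightarrow> 'b2"            \<comment> \<open>funit x : 1_{F x} => F(1_x)\<close>
  fcomp :: "'a1 \<Rightarrow> 'a1 \<Rightarrow> 'b2"     \<comment> \<open>fcomp g f : F g o F f => F(g o f)\<close>

definition lax_functor :: "('o1,'a1,'b1) tcat \<Rightarrow> ('o2,'a2,'b2) tcat \<Rightarrow>
    ('o1,'a1,'b1,'o2,'a2,'b2) lfun \<Rightarrow> bool" where
  "lax_functor X Y F \<longleftrightarrow>
    (\<forall>x\<in>Ob X. fob F x \<in> Ob Y) \<and>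
    (\<forall>f\<in>Ar X. far F f \<in> Ar Y \<and> dom1 Y (far F f) = fob F (dom1 X f) \<and> cod1 Y (far F f) = fob F (cod1 X f)) \<and>
    (\<forall>a\<in>Cl X. fcl F a \<in> Cl Y \<and> src2 Y (fcl F a) = far F (src2 X a) \<and> tgt2 Y (fcl F a) = far F (tgt2 X a)) \<and>
    (\<forall>f\<in>Ar X. fcl F (id2 X f) = id2 Y (far F f)) \<and>
    (\<forall>a\<in>Cl X. \<forall>b\<in>Cl X. tgt2 X a = src2 X b \<longrightarrow> fcl F (vc X b a) = vc Y (fcl F b) (fcl F a)) \<and>
    (\<forall>x\<in>Ob X. funit F x \<in> Cl Y \<and> src2 Y (funit F x) = idn Y (fob F x) \<and>
        tgt2 Y (funit F x) = far F (idn X x)) \<and>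
    (\<forall>f\<in>Ar X. \<forall>g\<in>Ar X. cod1 X f = dom1 X g \<longrightarrow>
        fcomp F g f \<in> Cl Y \<and> src2 Y (fcomp F g f) = cmp Y (far F g) (far F f) \<and>
        tgt2 Y (fcomp F g f) = far F (cmp X g f)) \<and>
    (\<forall>a\<in>Cl X. \<forall>b\<in>Cl X. cod1 X (src2 X a) = dom1 X (src2 X b) \<longrightarrow>
        vc Y (fcomp F (tgt2 X b) (tgt2 X a)) (hc Y (fcl F b) (fcl F a))
          = vc Y (fcl F (hc X b a)) (fcomp F (src2 X b) (src2 X a))) \<and>
    (\<forall>f\<in>Ar X. \<forall>g\<in>Ar X. \<forall>h\<in>Ar X. cod1 X f = dom1 X g \<longrightarrow> cod1 X g = dom1 X h \<longrightarrow>
        vc Y (fcomp F h (cmp X g f)) (hc Y (id2 Y (far F h)) (fcomp F g f))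
          = vc Y (fcomp F (cmp X h g) f) (hc Y (fcomp F h g) (id2 Y (far F f)))) \<and>
    (\<forall>f\<in>Ar X.
        vc Y (fcomp F f (idn X (dom1 X f))) (hc Y (id2 Y (far F f)) (funit F (dom1 X f))) = id2 Y (far F f) \<and>
        vc Y (fcomp F (idn X (cod1 X f)) f) (hc Y (funit F (cod1 X f)) (id2 Y (far F f))) = id2 Y (far F f))"

definition strict_functor :: "('o1,'a1,'b1) tcat \<Rightarrow> ('o2,'a2,'b2) tcat \<Rightarrow>
    ('o1,'a1,'b1,'o2,'a2,'b2) lfun \<Rightarrow> bool" where
  "strict_functor X Y F \<longleftrightarrow> lax_functor X Y F \<and>
    (\<forall>x\<in>Ob X. far F (idn X x) = idn Y (fob F x) \<and> funit F x = id2 Y (idn Y (fob F x))) \<and>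
    (\<forall>f\<in>Ar X. \<forall>g\<in>Ar X. cod1 X f = dom1 X g \<longrightarrow>
        far F (cmp X g f) = cmp Y (far F g) (far F f) \<and>
        fcomp F g f = id2 Y (cmp Y (far F g) (far F f)))"

text \<open>Composite G o F (Z is the codomain of G) and identity lax functor.\<close>
definition lcomp :: "('o3,'a3,'b3) tcat \<Rightarrow> ('o2,'a2,'b2,'o3,'a3,'b3) lfun \<Rightarrow>
    ('o1,'a1,'b1,'o2,'a2,'b2) lfun \<Rightarrow> ('o1,'a1,'b1,'o3,'a3,'b3) lfun" where
  "lcomp Z G F = \<lparr> fob = fob G \<circ> fob F, far = far G \<circ> far F, fcl = fcl G \<circ> fcl F,
     funit = (\<lambda>x. vc Z (fcl G (funit F x)) (funit G (fob F x))),
     fcomp = (\<lambda>g f. vc Z (fcl G (fcomp F g f)) (fcomp G (far F g) (far F f))) \<rparr>"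

definition lid :: "('o,'a,'b) tcat \<Rightarrow> ('o,'a,'b,'o,'a,'b) lfun" where
  "lid X = \<lparr> fob = id, far = id, fcl = id, funit = (\<lambda>x. id2 X (idn X x)),
     fcomp = (\<lambda>g f. id2 X (cmp X g f)) \<rparr>"

definition lfun_eq :: "('o1,'a1,'b1) tcat \<Rightarrow> ('o1,'a1,'b1,'o2,'a2,'b2) lfun \<Rightarrow>
    ('o1,'a1,'b1,'o2,'a2,'b2) lfun \<Rightarrow> bool" where
  "lfun_eq X F G \<longleftrightarrow>
    (\<forall>x\<in>Ob X. fob F x = fob G x \<and> funit F x = funit G x) \<and>
    (\<forall>f\<in>Ar X. far F f = far G f) \<and>
    (\<forall>a\<in>Cl X. fcl F a = fcl G a) \<and>
    (\<forall>f\<in>Ar X. \<forall>g\<in>Ar X. cod1 X f = dom1 X g \<longrightarrow> fcomp F g f = fcomp G g f)"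

definition icon :: "('o1,'a1,'b1) tcat \<Rightarrow> ('o2,'a2,'b2) tcat \<Rightarrow>
    ('o1,'a1,'b1,'o2,'a2,'b2) lfun \<Rightarrow> ('o1,'a1,'b1,'o2,'a2,'b2) lfun \<Rightarrow> ('a1 \<Rightarrow> 'b2) \<Rightarrow> bool" where
  "icon X Y F G \<theta> \<longleftrightarrow>
    (\<forall>x\<in>Ob X. fob F x = fob G x) \<and>
    (\<forall>f\<in>Ar X. \<theta> f \<in> Cl Y \<and> src2 Y (\<theta> f) = far F f \<and> tgt2 Y (\<theta> f) = far G f) \<and>
    (\<forall>a\<in>Cl X. vc Y (fcl G a) (\<theta> (src2 X a)) = vc Y (\<theta> (tgt2 X a)) (fcl F a)) \<and>
    (\<forall>x\<in>Ob X. vc Y (\<theta> (idn X x)) (funit F x) = funit G x) \<and>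
    (\<forall>f\<in>Ar X. \<forall>g\<in>Ar X. cod1 X f = dom1 X g \<longrightarrow>
        vc Y (\<theta> (cmp X g f)) (fcomp F g f) = vc Y (fcomp G g f) (hc Y (\<theta> g) (\<theta> f)))"

definition Lfun :: "('o1,'a1,'b1) tcat \<Rightarrow> ('o2,'a2,'b2) tcat \<Rightarrow>
    ('o1 \<times> 'o2, ('o1,'a1,'o2,'a2) sarr, ('o1,'a1,'b1,'o2,'a2,'b2) scell, 'o1 \<times> 'o2, 'a1 \<times> 'a2, 'b1 \<times> 'b2) lfun" where
  "Lfun C D = \<lparr> fob = id,
     far = (\<lambda>f. (pcomp C (a_p f), pcomp D (a_q f))),
     fcl = (\<lambda>a. (hseg C (c_al a) (fst (a_p (c_tgt a))) 0 (a_n (c_tgt a)),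
                  hseg D (c_be a) (fst (a_q (c_tgt a))) 0 (a_m (c_tgt a)))),
     funit = (\<lambda>x. id2 (prodcat C D) (idn (prodcat C D) x)),
     fcomp = (\<lambda>g f. id2 (prodcat C D) (cmp (prodcat C D)
                 (pcomp C (a_p g), pcomp D (a_q g)) (pcomp C (a_p f), pcomp D (a_q f)))) \<rparr>"

definition Rarr :: "('o1,'a1,'b1) tcat \<Rightarrow> ('o2,'a2,'b2) tcat \<Rightarrow> 'a1 \<times> 'a2 \<Rightarrow> ('o1,'a1,'o2,'a2) sarr" where
  "Rarr C D cd = (1, (dom1 C (fst cd), [fst cd]), [0,0,1], 1, (dom1 D (snd cd), [snd cd]), [0,1,1])"

definition Rfun :: "('o1,'a1,'b1) tcat \<Rightarrow> ('o2,'a2,'b2) tcat \<Rightarrow>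
    ('o1 \<times> 'o2, 'a1 \<times> 'a2, 'b1 \<times> 'b2, 'o1 \<times> 'o2, ('o1,'a1,'o2,'a2) sarr, ('o1,'a1,'b1,'o2,'a2,'b2) scell) lfun" where
  "Rfun C D = \<lparr> fob = id,
     far = Rarr C D,
     fcl = (\<lambda>gd. (Rarr C D (src2 C (fst gd), src2 D (snd gd)), Rarr C D (tgt2 C (fst gd), tgt2 D (snd gd)),
                  [0,1], [fst gd], [0,1], [snd gd])),
     funit = (\<lambda>x. (sim_idn x, Rarr C D (idn C (fst x), idn D (snd x)),
                  [0,0], [id2 C (idn C (fst x))], [0,0], [id2 D (idn D (snd x))])),
     fcomp = (\<lambda>g f. (sim_cmp (Rarr C D g) (Rarr C D f),
                  Rarr C D (cmp C (fst g) (fst f), cmp D (snd g) (snd f)),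
                  [0,2], [id2 C (cmp C (fst g) (fst f))], [0,2], [id2 D (cmp D (snd g) (snd f))])) \<rparr>"

definition eta :: "('o1,'a1,'b1) tcat \<Rightarrow> ('o2,'a2,'b2) tcat \<Rightarrow>
    ('o1,'a1,'o2,'a2) sarr \<Rightarrow> ('o1,'a1,'b1,'o2,'a2,'b2) scell" where
  "eta C D f = (f, Rarr C D (far (Lfun C D) f), [0, a_n f], [id2 C (pcomp C (a_p f))],
                [0, a_m f], [id2 D (pcomp D (a_q f))])"

end

theory Submission imports Defs begin

definition seg :: "nat \<Rightarrow> nat \<Rightarrow> 'a list \<Rightarrow> 'a list" where
  "seg j k xs = take (k - j) (drop j xs)"

lemma seg_append: "j \<le> k \<Longrightarrow> k \<le> l \<Longrightarrow> seg j l xs = seg j k xs @ seg k l xs"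
proof -
  assume a: "j \<le> k" "k \<le> l"
  have "l - j = (k - j) + (l - k)" using a by simp
  then have "take (l - j) (drop j xs) = take (k - j) (drop j xs) @ take (l - k) (drop (k - j) (drop j xs))"
    by (simp add: take_add)
  also have "drop (k - j) (drop j xs) = drop k xs" using a by simp
  finally show ?thesis by (simp add: seg_def)
qed

lemma seg_single: "k < length xs \<Longrightarrow> seg k (Suc k) xs = [xs ! k]"
  by (simp add: seg_def take_Suc_conv_app_nth)

lemma seg_empty[simp]: "seg k k xs = []" by (simp add: seg_def)

lemma map_seg: "map f (seg j k xs) = seg j k (map f xs)"
  by (simp add: seg_def take_map drop_map)

locale gcat =
  fixes Obs :: "'o set" and K :: "'a set" and d c :: "'a \<Rightarrow> 'o" and e :: "'o \<Rightarrow> 'a"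
    and m :: "'a \<Rightarrow> 'a \<Rightarrow> 'a"
  assumes dc_Obs: "f \<in> K \<Longrightarrow> d f \<in> Obs \<and> c f \<in> Obs"
  and e_K: "x \<in> Obs \<Longrightarrow> e x \<in> K \<and> d (e x) = x \<and> c (e x) = x"
  and m_K: "f \<in> K \<Longrightarrow> g \<in> K \<Longrightarrow> c f = d g \<Longrightarrow> m g f \<in> K \<and> d (m g f) = d f \<and> c (m g f) = c g"
  and unitR: "f \<in> K \<Longrightarrow> m f (e (d f)) = f"
  and unitL: "f \<in> K \<Longrightarrow> m (e (c f)) f = f"
  and assoc: "f\<in>K \<Longrightarrow> g\<in>K \<Longrightarrow> h\<in>K \<Longrightarrow> c f = d g \<Longrightarrow> c g = d h \<Longrightarrow> m h (m g f) = m (m h g) f"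
begin

definition chain :: "'o \<Rightarrow> 'a list \<Rightarrow> 'a" where
  "chain x fs = foldl (\<lambda>acc f. m f acc) (e x) fs"

fun chainok :: "'o \<Rightarrow> 'a list \<Rightarrow> 'o \<Rightarrow> bool" where
  "chainok x [] y = (x = y \<and> x \<in> Obs)"
| "chainok x (f#fs) y = (f \<in> K \<and> d f = x \<and> chainok (c f) fs y)"

lemma chainok_append: "chainok x (fs @ gs) z \<longleftrightarrow> (\<exists>y. chainok x fs y \<and> chainok y gs z)"
proof (induction fs arbitrary: x)
  case Nil
  then show ?case
  proof
    assume "chainok x ([] @ gs) z"
    moreover have "x \<in> Obs" using calculation dc_Obs by (cases gs) auto
    ultimately show "\<exists>y. chainok x [] y \<and> chainok y gs z" by auto
  qed auto
qed auto

lemma chainok_Obs: "chainok x fs y \<Longrightarrow> x \<in> Obs \<and> y \<in> Obs"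
  by (induction fs arbitrary: x) (auto dest: dc_Obs)

lemma foldl_chain:
  "chainok x fs y \<Longrightarrow> a \<in> K \<Longrightarrow> c a = x \<Longrightarrow>
   foldl (\<lambda>acc f. m f acc) a fs = m (chain x fs) a \<and> chain x fs \<in> K \<and> d (chain x fs) = x \<and> c (chain x fs) = y"
proof (induction fs arbitrary: x a)
  case Nil
  then show ?case by (auto simp: chain_def unitL e_K)
next
  case (Cons f fs)
  from Cons.prems have f: "f \<in> K" "d f = x" "chainok (c f) fs y" by auto
  have mfa: "m f a \<in> K" "c (m f a) = c f" using m_K[of a f] f Cons.prems by auto
  note IH1 = Cons.IH[OF f(3) mfa]
  note IH2 = Cons.IH[OF f(3) f(1) refl]
  have ch: "chain x (f#fs) = m (chain (c f) fs) f"
    using IH2 unitR[OF f(1)] f(2) by (simp add: chain_def)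
  show ?case
    using IH1 IH2 ch f Cons.prems m_K[of f "chain (c f) fs"]
    by (auto simp: assoc)
qed

lemma chain_props: "chainok x fs y \<Longrightarrow> chain x fs \<in> K \<and> d (chain x fs) = x \<and> c (chain x fs) = y"
  using foldl_chain[of x fs y "e x"] chainok_Obs[of x fs y] e_K by auto

lemma chain_append: "chainok x fs y \<Longrightarrow> chainok y gs z \<Longrightarrow> chain x (fs @ gs) = m (chain y gs) (chain x fs)"
  using foldl_chain[of y gs z "chain x fs"] chain_props[of x fs y]
  by (simp add: chain_def[of x "fs @ gs"] chain_def[of x fs])

lemma chain_snoc: "chain x (fs @ [f]) = m f (chain x fs)"
  by (simp add: chain_def)

lemma chainok_seg:
  assumes "length xs = N" "\<forall>i<N. xs!i \<in> K \<and> d (xs!i) = ob i \<and> c (xs!i) = ob (Suc i)"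
    "\<forall>i\<le>N. ob i \<in> Obs" "j \<le> k" "k \<le> N"
  shows "chainok (ob j) (seg j k xs) (ob k)"
  using assms(4,5)
proof (induction k)
  case 0
  then show ?case using assms(3) by auto
next
  case (Suc k)
  show ?case
  proof (cases "j = Suc k")
    case True
    then show ?thesis using assms(3) Suc by auto
  next
    case False
    then have jk: "j \<le> k" using Suc by auto
    have "seg j (Suc k) xs = seg j k xs @ seg k (Suc k) xs" using jk seg_append[of j k "Suc k" xs] by simp
    also have "\<dots> = seg j k xs @ [xs ! k]" using Suc assms(1) by (simp add: seg_single)
    finally have e: "seg j (Suc k) xs = seg j k xs @ [xs ! k]" .
    have k: "k < N" using Suc.prems by simp
    have "chainok (ob k) [xs ! k] (ob (Suc k))" using assms(2,3) k by auto
    then show ?thesis unfolding e using Suc.IH jk Suc.prems chainok_append by auto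
  qed
qed

lemma partition:
  assumes "length xs = N" "\<forall>i<N. xs!i \<in> K \<and> d (xs!i) = ob i \<and> c (xs!i) = ob (Suc i)"
    "\<forall>i\<le>N. ob i \<in> Obs" "j \<le> k"
    "\<forall>i i'. j \<le> i \<longrightarrow> i \<le> i' \<longrightarrow> i' \<le> k \<longrightarrow> \<xi> i \<le> \<xi> i'" "\<xi> k \<le> N"
  shows "chainok (ob (\<xi> j)) (map (\<lambda>i. chain (ob (\<xi> i)) (seg (\<xi> i) (\<xi> (Suc i)) xs)) [j..<k]) (ob (\<xi> k))
      \<and> chain (ob (\<xi> j)) (map (\<lambda>i. chain (ob (\<xi> i)) (seg (\<xi> i) (\<xi> (Suc i)) xs)) [j..<k])
          = chain (ob (\<xi> j)) (seg (\<xi> j) (\<xi> k) xs)"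
  using assms(4,5,6)
proof (induction k)
  case 0
  then show ?case using assms(3) by auto
next
  case (Suc k)
  show ?case
  proof (cases "j = Suc k")
    case True
    then show ?thesis using assms(3) Suc by (auto simp: chain_def)
  next
    case False
    then have jk: "j \<le> k" using Suc by auto
    have mono: "\<forall>i i'. j \<le> i \<longrightarrow> i \<le> i' \<longrightarrow> i' \<le> k \<longrightarrow> \<xi> i \<le> \<xi> i'" using Suc.prems by auto
    have xk: "\<xi> k \<le> \<xi> (Suc k)" "\<xi> j \<le> \<xi> k" using Suc.prems jk by auto
    have xkN: "\<xi> k \<le> N" using xk Suc.prems by auto
    note IH = Suc.IH[OF jk mono xkN]
    have s: "chainok (ob (\<xi> k)) (seg (\<xi> k) (\<xi> (Suc k)) xs) (ob (\<xi> (Suc k)))"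
      using chainok_seg[OF assms(1,2,3)] xk Suc.prems by auto
    have s2: "chainok (ob (\<xi> j)) (seg (\<xi> j) (\<xi> k) xs) (ob (\<xi> k))"
      using chainok_seg[OF assms(1,2,3)] xk xkN by auto
    note cp = chain_props[OF s]
    have up: "[j..<Suc k] = [j..<k] @ [k]" using jk by simp
    have ok: "chainok (ob (\<xi> j)) (map (\<lambda>i. chain (ob (\<xi> i)) (seg (\<xi> i) (\<xi> (Suc i)) xs)) [j..<Suc k]) (ob (\<xi> (Suc k)))"
      unfolding up using IH cp chainok_Obs[OF s] by (auto simp: chainok_append)
    have "chain (ob (\<xi> j)) (map (\<lambda>i. chain (ob (\<xi> i)) (seg (\<xi> i) (\<xi> (Suc i)) xs)) [j..<Suc k])
        = m (chain (ob (\<xi> k)) (seg (\<xi> k) (\<xi> (Suc k)) xs)) (chain (ob (\<xi> j)) (seg (\<xi> j) (\<xi> k) xs))"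
      unfolding up using IH by (simp add: chain_snoc)
    also have "\<dots> = chain (ob (\<xi> j)) (seg (\<xi> j) (\<xi> k) xs @ seg (\<xi> k) (\<xi> (Suc k)) xs)"
      using chain_append[OF s2 s] by simp
    also have "\<dots> = chain (ob (\<xi> j)) (seg (\<xi> j) (\<xi> (Suc k)) xs)"
      using seg_append[of "\<xi> j" "\<xi> k" "\<xi> (Suc k)" xs] xk by simp
    finally have eq: "chain (ob (\<xi> j)) (map (\<lambda>i. chain (ob (\<xi> i)) (seg (\<xi> i) (\<xi> (Suc i)) xs)) [j..<Suc k])
       = chain (ob (\<xi> j)) (seg (\<xi> j) (\<xi> (Suc k)) xs)" .
    show ?thesis using ok eq by blast
  qed
qed

end

locale tc =
  fixes C :: "('o,'a,'b) tcat"
  assumes tc: "twocat C"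
begin

lemmas T1 = tc[unfolded twocat_def, THEN conjunct1]
lemmas T2 = tc[unfolded twocat_def, THEN conjunct2, THEN conjunct1]
lemmas T3 = tc[unfolded twocat_def, THEN conjunct2, THEN conjunct2, THEN conjunct1]
lemmas T4 = tc[unfolded twocat_def, THEN conjunct2, THEN conjunct2, THEN conjunct2, THEN conjunct1]
lemmas T5 = tc[unfolded twocat_def, THEN conjunct2, THEN conjunct2, THEN conjunct2, THEN conjunct2, THEN conjunct1]
lemmas T6 = tc[unfolded twocat_def, THEN conjunct2, THEN conjunct2, THEN conjunct2, THEN conjunct2, THEN conjunct2, THEN conjunct1]
lemmas T7 = tc[unfolded twocat_def, THEN conjunct2, THEN conjunct2, THEN conjunct2, THEN conjunct2, THEN conjunct2, THEN conjunct2, THEN conjunct1]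
lemmas T8 = tc[unfolded twocat_def, THEN conjunct2, THEN conjunct2, THEN conjunct2, THEN conjunct2, THEN conjunct2, THEN conjunct2, THEN conjunct2, THEN conjunct1]
lemmas T9 = tc[unfolded twocat_def, THEN conjunct2, THEN conjunct2, THEN conjunct2, THEN conjunct2, THEN conjunct2, THEN conjunct2, THEN conjunct2, THEN conjunct2, THEN conjunct1]
lemmas T10 = tc[unfolded twocat_def, THEN conjunct2, THEN conjunct2, THEN conjunct2, THEN conjunct2, THEN conjunct2, THEN conjunct2, THEN conjunct2, THEN conjunct2, THEN conjunct2, THEN conjunct1]
lemmas T11 = tc[unfolded twocat_def, THEN conjunct2, THEN conjunct2, THEN conjunct2, THEN conjunct2, THEN conjunct2, THEN conjunct2, THEN conjunct2, THEN conjunct2, THEN conjunct2, THEN conjunct2, THEN conjunct1]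
lemmas T12 = tc[unfolded twocat_def, THEN conjunct2, THEN conjunct2, THEN conjunct2, THEN conjunct2, THEN conjunct2, THEN conjunct2, THEN conjunct2, THEN conjunct2, THEN conjunct2, THEN conjunct2, THEN conjunct2, THEN conjunct1]
lemmas T13 = tc[unfolded twocat_def, THEN conjunct2, THEN conjunct2, THEN conjunct2, THEN conjunct2, THEN conjunct2, THEN conjunct2, THEN conjunct2, THEN conjunct2, THEN conjunct2, THEN conjunct2, THEN conjunct2, THEN conjunct2, THEN conjunct1]
lemmas T14 = tc[unfolded twocat_def, THEN conjunct2, THEN conjunct2, THEN conjunct2, THEN conjunct2, THEN conjunct2, THEN conjunct2, THEN conjunct2, THEN conjunct2, THEN conjunct2, THEN conjunct2, THEN conjunct2, THEN conjunct2, THEN conjunct2, THEN conjunct1]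
lemmas T15 = tc[unfolded twocat_def, THEN conjunct2, THEN conjunct2, THEN conjunct2, THEN conjunct2, THEN conjunct2, THEN conjunct2, THEN conjunct2, THEN conjunct2, THEN conjunct2, THEN conjunct2, THEN conjunct2, THEN conjunct2, THEN conjunct2, THEN conjunct2]

lemma ar_ob: "f \<in> Ar C \<Longrightarrow> dom1 C f \<in> Ob C \<and> cod1 C f \<in> Ob C"
  using T1 by blast
lemma idn_ar: "x \<in> Ob C \<Longrightarrow> idn C x \<in> Ar C \<and> dom1 C (idn C x) = x \<and> cod1 C (idn C x) = x"
  using T2 by blast
lemma cmp_ar: "f \<in> Ar C \<Longrightarrow> g \<in> Ar C \<Longrightarrow> cod1 C f = dom1 C g \<Longrightarrow>
    cmp C g f \<in> Ar C \<and> dom1 C (cmp C g f) = dom1 C f \<and> cod1 C (cmp C g f) = cod1 C g"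
  using T3 by blast
lemma cmp_unitR: "f \<in> Ar C \<Longrightarrow> cmp C f (idn C (dom1 C f)) = f"
  using T4 by blast
lemma cmp_unitL: "f \<in> Ar C \<Longrightarrow> cmp C (idn C (cod1 C f)) f = f"
  using T4 by blast
lemma cmp_assoc: "f\<in>Ar C \<Longrightarrow> g\<in>Ar C \<Longrightarrow> h\<in>Ar C \<Longrightarrow> cod1 C f = dom1 C g \<Longrightarrow> cod1 C g = dom1 C h \<Longrightarrow>
        cmp C h (cmp C g f) = cmp C (cmp C h g) f"
  using T5 by blast
lemma cl_ar: "a \<in> Cl C \<Longrightarrow> src2 C a \<in> Ar C \<and> tgt2 C a \<in> Ar C \<and>
        dom1 C (src2 C a) = dom1 C (tgt2 C a) \<and> cod1 C (src2 C a) = cod1 C (tgt2 C a)"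
  using T6 by blast
lemma id2_cl: "f \<in> Ar C \<Longrightarrow> id2 C f \<in> Cl C \<and> src2 C (id2 C f) = f \<and> tgt2 C (id2 C f) = f"
  using T7 by blast
lemma vc_cl: "a\<in>Cl C \<Longrightarrow> b\<in>Cl C \<Longrightarrow> tgt2 C a = src2 C b \<Longrightarrow>
        vc C b a \<in> Cl C \<and> src2 C (vc C b a) = src2 C a \<and> tgt2 C (vc C b a) = tgt2 C b"
  using T8 by blast
lemma vc_unitR: "a\<in>Cl C \<Longrightarrow> vc C a (id2 C (src2 C a)) = a"
  using T9 by blast
lemma vc_unitL: "a\<in>Cl C \<Longrightarrow> vc C (id2 C (tgt2 C a)) a = a"
  using T9 by blast
lemma vc_assoc: "a\<in>Cl C \<Longrightarrow> b\<in>Cl C \<Longrightarrow> c\<in>Cl C \<Longrightarrow> tgt2 C a = src2 C b \<Longrightarrow> tgt2 C b = src2 C c \<Longrightarrow>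
        vc C c (vc C b a) = vc C (vc C c b) a"
  using T10 by blast
lemma hc_cl: "a\<in>Cl C \<Longrightarrow> b\<in>Cl C \<Longrightarrow> cod1 C (src2 C a) = dom1 C (src2 C b) \<Longrightarrow>
        hc C b a \<in> Cl C \<and> src2 C (hc C b a) = cmp C (src2 C b) (src2 C a) \<and>
        tgt2 C (hc C b a) = cmp C (tgt2 C b) (tgt2 C a)"
  using T11 by blast
lemma hc_unitR: "a\<in>Cl C \<Longrightarrow> hc C a (id2 C (idn C (dom1 C (src2 C a)))) = a"
  using T12 by blast
lemma hc_unitL: "a\<in>Cl C \<Longrightarrow> hc C (id2 C (idn C (cod1 C (src2 C a)))) a = a"
  using T12 by blast
lemma hc_assoc: "a\<in>Cl C \<Longrightarrow> b\<in>Cl C \<Longrightarrow> c\<in>Cl C \<Longrightarrow> cod1 C (src2 C a) = dom1 C (src2 C b) \<Longrightarrow>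
        cod1 C (src2 C b) = dom1 C (src2 C c) \<Longrightarrow> hc C c (hc C b a) = hc C (hc C c b) a"
  using T13 by blast
lemma id2_cmp: "f\<in>Ar C \<Longrightarrow> g\<in>Ar C \<Longrightarrow> cod1 C f = dom1 C g \<Longrightarrow>
        id2 C (cmp C g f) = hc C (id2 C g) (id2 C f)"
  using T14 by blast
lemma interchange: "a\<in>Cl C \<Longrightarrow> a'\<in>Cl C \<Longrightarrow> b\<in>Cl C \<Longrightarrow> b'\<in>Cl C \<Longrightarrow>
        tgt2 C a = src2 C a' \<Longrightarrow> tgt2 C b = src2 C b' \<Longrightarrow> cod1 C (src2 C a) = dom1 C (src2 C b) \<Longrightarrow>
        hc C (vc C b' b) (vc C a' a) = vc C (hc C b' a') (hc C b a)"
  using T15 by blast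

lemma vc_id2_id2: "f \<in> Ar C \<Longrightarrow> vc C (id2 C f) (id2 C f) = id2 C f"
  using vc_unitR[of "id2 C f"] id2_cl by auto

sublocale A: gcat "Ob C" "Ar C" "dom1 C" "cod1 C" "idn C" "cmp C"
  by unfold_locales (auto simp: ar_ob idn_ar cmp_ar cmp_unitR cmp_unitL cmp_assoc)

sublocale H: gcat "Ob C" "Cl C" "\<lambda>a. dom1 C (src2 C a)" "\<lambda>a. cod1 C (src2 C a)"
   "\<lambda>x. id2 C (idn C x)" "hc C"
proof unfold_locales
  fix f assume "f \<in> Cl C" then show "dom1 C (src2 C f) \<in> Ob C \<and> cod1 C (src2 C f) \<in> Ob C"
    using cl_ar ar_ob by blast
next
  fix x assume "x \<in> Ob C" then show "id2 C (idn C x) \<in> Cl C \<and> dom1 C (src2 C (id2 C (idn C x))) = x \<and>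
      cod1 C (src2 C (id2 C (idn C x))) = x" using idn_ar id2_cl by auto
next
  fix f g assume "f \<in> Cl C" "g \<in> Cl C" "cod1 C (src2 C f) = dom1 C (src2 C g)"
  then show "hc C g f \<in> Cl C \<and> dom1 C (src2 C (hc C g f)) = dom1 C (src2 C f) \<and>
      cod1 C (src2 C (hc C g f)) = cod1 C (src2 C g)" using hc_cl cmp_ar cl_ar by auto
qed (auto simp: hc_unitR hc_unitL hc_assoc)

lemma H_src_tgt: "H.chainok x as y \<Longrightarrow> src2 C (H.chain x as) = A.chain x (map (src2 C) as)
    \<and> tgt2 C (H.chain x as) = A.chain x (map (tgt2 C) as)"
proof (induction as arbitrary: y rule: rev_induct)
  case Nil
  then have "x \<in> Ob C" by auto
  then show ?case using idn_ar id2_cl by (simp add: H.chain_def A.chain_def)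
next
  case (snoc a as)
  then obtain z where z: "H.chainok x as z" "H.chainok z [a] y" by (auto simp: H.chainok_append)
  note IH = snoc.IH[OF z(1)]
  note cp = H.chain_props[OF z(1)]
  have a: "a \<in> Cl C" "dom1 C (src2 C a) = z" using z(2) by auto
  have h: "hc C a (H.chain x as) \<in> Cl C \<and> src2 C (hc C a (H.chain x as)) = cmp C (src2 C a) (src2 C (H.chain x as)) \<and>
        tgt2 C (hc C a (H.chain x as)) = cmp C (tgt2 C a) (tgt2 C (H.chain x as))"
    using hc_cl[of "H.chain x as" a] cp a by auto
  show ?case using h IH by (simp add: H.chain_snoc A.chain_snoc)
qed

lemma H_id2: "A.chainok x fs y \<Longrightarrow> H.chain x (map (id2 C) fs) = id2 C (A.chain x fs)"
proof (induction fs arbitrary: y rule: rev_induct)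
  case Nil
  then show ?case by (simp add: H.chain_def A.chain_def)
next
  case (snoc f fs)
  then obtain z where z: "A.chainok x fs z" "A.chainok z [f] y" by (auto simp: A.chainok_append)
  note cp = A.chain_props[OF z(1)]
  have f: "f \<in> Ar C" "dom1 C f = z" using z(2) by auto
  show ?case using snoc.IH[OF z(1)] id2_cmp[of "A.chain x fs" f] cp f
    by (simp add: H.chain_snoc A.chain_snoc)
qed

lemma H_vc:
  assumes "\<forall>i<N. A i \<in> Cl C \<and> B i \<in> Cl C \<and> tgt2 C (A i) = src2 C (B i)"
    "H.chainok x (map A [0..<N]) y" "H.chainok x (map B [0..<N]) y'"
  shows "H.chain x (map (\<lambda>i. vc C (B i) (A i)) [0..<N]) = vc C (H.chain x (map B [0..<N])) (H.chain x (map A [0..<N]))"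
  using assms
proof (induction N arbitrary: y y')
  case 0
  then have "x \<in> Ob C" by auto
  then show ?case using vc_id2_id2 idn_ar by (simp add: H.chain_def)
next
  case (Suc N)
  obtain z where z: "H.chainok x (map A [0..<N]) z" "H.chainok z [A N] y"
    using Suc.prems(2) by (auto simp: H.chainok_append)
  obtain z' where z': "H.chainok x (map B [0..<N]) z'" "H.chainok z' [B N] y'"
    using Suc.prems(3) by (auto simp: H.chainok_append)
  note IH = Suc.IH[OF _ z(1) z'(1)]
  have IH': "H.chain x (map (\<lambda>i. vc C (B i) (A i)) [0..<N]) = vc C (H.chain x (map B [0..<N])) (H.chain x (map A [0..<N]))"
    using IH Suc.prems(1) by auto
  let ?a = "H.chain x (map A [0..<N])" and ?a' = "H.chain x (map B [0..<N])"
  have ca: "?a \<in> Cl C" "cod1 C (src2 C ?a) = z" using H.chain_props[OF z(1)] by auto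
  have ca': "?a' \<in> Cl C" using H.chain_props[OF z'(1)] by auto
  have mq: "map (tgt2 C) (map A [0..<N]) = map (src2 C) (map B [0..<N])" using Suc.prems(1) by auto
  have t: "tgt2 C ?a = src2 C ?a'" using H_src_tgt[OF z(1)] H_src_tgt[OF z'(1)] mq by metis
  have AN: "A N \<in> Cl C" "B N \<in> Cl C" "tgt2 C (A N) = src2 C (B N)" "dom1 C (src2 C (A N)) = z"
    using Suc.prems(1) z(2) by auto
  show ?case
    using interchange[OF ca(1) ca' AN(1) AN(2) t AN(3)] ca(2) AN(4) IH'
    by (simp add: H.chain_snoc)
qed

lemma path_facts:
  assumes "is_path C n p"
  shows "\<forall>i<n. snd p ! i \<in> Ar C \<and> dom1 C (snd p ! i) = pobj C p i \<and> cod1 C (snd p ! i) = pobj C p (Suc i)"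
    "\<forall>i\<le>n. pobj C p i \<in> Ob C" "length (snd p) = n" "pobj C p 0 = fst p"
proof -
  have p: "fst p \<in> Ob C" "length (snd p) = n" "set (snd p) \<subseteq> Ar C"
     "0 < n \<longrightarrow> dom1 C (snd p ! 0) = fst p" "\<forall>i. Suc i < n \<longrightarrow> cod1 C (snd p ! i) = dom1 C (snd p ! Suc i)"
    using assms unfolding is_path_def by auto
  show 1: "\<forall>i<n. snd p ! i \<in> Ar C \<and> dom1 C (snd p ! i) = pobj C p i \<and> cod1 C (snd p ! i) = pobj C p (Suc i)"
  proof (intro allI impI conjI)
    fix i assume i: "i < n"
    show "snd p ! i \<in> Ar C" using p(2,3) i nth_mem by blast
    show "dom1 C (snd p ! i) = pobj C p i"
    proof (cases i)
      case 0 then show ?thesis using p i by (simp add: pobj_def)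
    next
      case (Suc j) then show ?thesis using p(5)[rule_format, of j] i by (simp add: pobj_def)
    qed
    show "cod1 C (snd p ! i) = pobj C p (Suc i)" by (simp add: pobj_def)
  qed
  show "\<forall>i\<le>n. pobj C p i \<in> Ob C"
  proof (intro allI impI)
    fix i assume i: "i \<le> n"
    show "pobj C p i \<in> Ob C"
    proof (cases i)
      case 0 then show ?thesis using p by (simp add: pobj_def)
    next
      case (Suc j) then show ?thesis using 1 i ar_ob by (auto simp: pobj_def)
    qed
  qed
  show "length (snd p) = n" by (fact p(2))
  show "pobj C p 0 = fst p" by (simp add: pobj_def)
qed

lemma pseg_eq: "pseg C p j k = A.chain (pobj C p j) (seg j k (snd p))"
  by (simp add: pseg_def A.chain_def seg_def)

lemma hseg_eq: "hseg C as x j k = H.chain x (seg j k as)"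
  by (simp add: hseg_def H.chain_def seg_def)

lemma path_chainok:
  assumes "is_path C n p" "j \<le> k" "k \<le> n"
  shows "A.chainok (pobj C p j) (seg j k (snd p)) (pobj C p k)"
  using A.chainok_seg[of "snd p" n "pobj C p" j k] path_facts[OF assms(1)] assms by auto

lemma pseg_props:
  assumes "is_path C n p" "j \<le> k" "k \<le> n"
  shows "pseg C p j k \<in> Ar C \<and> dom1 C (pseg C p j k) = pobj C p j \<and> cod1 C (pseg C p j k) = pobj C p k"
  using A.chain_props[OF path_chainok[OF assms]] by (simp add: pseg_eq)

lemma seg_all: "length xs = n \<Longrightarrow> seg 0 n xs = xs" by (simp add: seg_def)

lemma pcomp_props:
  assumes "is_path C n p"
  shows "pcomp C p \<in> Ar C \<and> dom1 C (pcomp C p) = fst p \<and> cod1 C (pcomp C p) = pobj C p n"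
    "pcomp C p = A.chain (fst p) (snd p)" "A.chainok (fst p) (snd p) (pobj C p n)"
  using pseg_props[OF assms, of 0 n] path_facts[OF assms] path_chainok[OF assms, of 0 n]
  by (auto simp: pcomp_def pseg_eq seg_all)

lemma pcomp_concat:
  assumes "is_path C n p" "is_path C n' p'" "fst p' = pobj C p n"
  shows "pcomp C (fst p, snd p @ snd p') = cmp C (pcomp C p') (pcomp C p)"
proof -
  have "pcomp C (fst p, snd p @ snd p') = A.chain (fst p) (snd p @ snd p')"
    by (simp add: pcomp_def pseg_eq pobj_def seg_def)
  also have "\<dots> = cmp C (A.chain (fst p') (snd p')) (A.chain (fst p) (snd p))"
    using A.chain_append pcomp_props(3)[OF assms(1)] pcomp_props(3)[OF assms(2)] assms(3) by simp
  finally show ?thesis using pcomp_props(2) assms by simp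
qed

end

lemma seg_map_upt: "j \<le> k \<Longrightarrow> k \<le> N \<Longrightarrow> seg j k (map f [0..<N]) = map f [j..<k]"
  by (simp add: seg_def take_map drop_map)

lemma dmap_facts:
  assumes "is_dmap nb n xi"
  shows "length xi = Suc nb" "xi!0 = 0" "xi!nb = n" "\<forall>i j. i \<le> j \<longrightarrow> j \<le> nb \<longrightarrow> xi!i \<le> xi!j"
  using assms unfolding is_dmap_def by (auto intro: sorted_nth_mono)

context tc
begin

lemma icon_facts:
  assumes p: "is_path C n p" and pb: "is_path C nb pb" and xi: "is_dmap nb n xi" and ic: "icon_path C p xi al pb"
  shows "length al = nb"
    "\<forall>i<nb. al!i \<in> Cl C \<and> dom1 C (src2 C (al!i)) = pobj C pb i \<and> cod1 C (src2 C (al!i)) = pobj C pb (Suc i)"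
    "\<forall>i<nb. src2 C (al!i) = pseg C p (xi!i) (xi!Suc i) \<and> tgt2 C (al!i) = snd pb ! i"
    "\<forall>i\<le>nb. pobj C p (xi!i) = pobj C pb i"
proof -
  have l: "length (snd pb) = nb" using path_facts(3)[OF pb] .
  show "length al = nb" using ic l by (simp add: icon_path_def)
  show 3: "\<forall>i<nb. src2 C (al!i) = pseg C p (xi!i) (xi!Suc i) \<and> tgt2 C (al!i) = snd pb ! i"
  proof (intro allI impI)
    fix i assume "i < nb"
    then have "Suc i \<in> {1..length (snd pb)}" using l by auto
    then show "src2 C (al!i) = pseg C p (xi!i) (xi!Suc i) \<and> tgt2 C (al!i) = snd pb ! i"
      using ic unfolding icon_path_def by (metis diff_Suc_1)
  qed
  show "\<forall>i<nb. al!i \<in> Cl C \<and> dom1 C (src2 C (al!i)) = pobj C pb i \<and> cod1 C (src2 C (al!i)) = pobj C pb (Suc i)"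
  proof (intro allI impI)
    fix i assume i: "i < nb"
    then have "Suc i \<in> {1..length (snd pb)}" using l by auto
    then have a: "al ! i \<in> Cl C" using ic unfolding icon_path_def by (metis diff_Suc_1)
    show "al!i \<in> Cl C \<and> dom1 C (src2 C (al!i)) = pobj C pb i \<and> cod1 C (src2 C (al!i)) = pobj C pb (Suc i)"
      using a cl_ar[OF a] 3 i path_facts(1)[OF pb] by auto
  qed
  show "\<forall>i\<le>nb. pobj C p (xi!i) = pobj C pb i" using ic l by (simp add: icon_path_def)
qed

lemma icon_hseg:
  assumes p: "is_path C n p" and pb: "is_path C nb pb" and xi: "is_dmap nb n xi" and ic: "icon_path C p xi al pb"
    and jk: "j \<le> k" "k \<le> nb"
  shows "H.chainok (pobj C pb j) (seg j k al) (pobj C pb k)"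
    "src2 C (hseg C al (pobj C pb j) j k) = pseg C p (xi!j) (xi!k)"
    "tgt2 C (hseg C al (pobj C pb j) j k) = pseg C pb j k"
    "hseg C al (pobj C pb j) j k \<in> Cl C"
proof -
  note F = icon_facts[OF assms(1-4)]
  note D = dmap_facts[OF xi]
  show ok: "H.chainok (pobj C pb j) (seg j k al) (pobj C pb k)"
    using H.chainok_seg[of al nb "pobj C pb" j k] F path_facts(2)[OF pb] jk by auto
  note ST = H_src_tgt[OF ok]
  show "hseg C al (pobj C pb j) j k \<in> Cl C" using H.chain_props[OF ok] by (simp add: hseg_eq)
  have ms: "map (src2 C) al = map (\<lambda>i. A.chain (pobj C p (xi!i)) (seg (xi!i) (xi!Suc i) (snd p))) [0..<nb]"
    by (rule nth_equalityI) (use F in \<open>auto simp: pseg_eq\<close>)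
  have mt: "map (tgt2 C) al = snd pb"
    by (rule nth_equalityI) (use F path_facts(3)[OF pb] in auto)
  have x: "pobj C pb j = pobj C p (xi!j)" using F jk by auto
  have part: "A.chain (pobj C p (xi ! j)) (map (\<lambda>i. A.chain (pobj C p (xi!i)) (seg (xi!i) (xi!Suc i) (snd p))) [j..<k])
      = A.chain (pobj C p (xi ! j)) (seg (xi ! j) (xi ! k) (snd p))"
  proof -
    have "xi ! k \<le> n" using D(3) D(4)[rule_format, of k nb] jk by simp
    then show ?thesis using A.partition[of "snd p" n "pobj C p" j k "\<lambda>i. xi ! i"] path_facts[OF p] jk D by auto
  qed
  show "src2 C (hseg C al (pobj C pb j) j k) = pseg C p (xi!j) (xi!k)"
    using ST x part jk by (simp add: hseg_eq map_seg ms seg_map_upt pseg_eq)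
  show "tgt2 C (hseg C al (pobj C pb j) j k) = pseg C pb j k"
    using ST by (simp add: hseg_eq map_seg mt pseg_eq)
qed

lemma icon_full:
  assumes p: "is_path C n p" and pb: "is_path C nb pb" and xi: "is_dmap nb n xi" and ic: "icon_path C p xi al pb"
  shows "H.chainok (fst pb) al (pobj C pb nb)"
    "src2 C (hseg C al (fst pb) 0 nb) = pcomp C p"
    "tgt2 C (hseg C al (fst pb) 0 nb) = pcomp C pb"
    "hseg C al (fst pb) 0 nb \<in> Cl C"
    "hseg C al (fst pb) 0 nb = H.chain (fst pb) al"
  using icon_hseg[OF assms, of 0 nb] icon_facts(1)[OF assms] path_facts(3,4)[OF p] path_facts(3,4)[OF pb]
    dmap_facts[OF xi]
  by (auto simp: seg_all pcomp_def hseg_eq)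

end

context tc
begin

lemma icon_vc:
  assumes ps: "is_path C ns ps" and pt: "is_path C nt pt" and pu: "is_path C nu pu"
    and xa: "is_dmap nt ns xa" and ia: "icon_path C ps xa aa pt"
    and xb: "is_dmap nu nt xb" and ib: "icon_path C pt xb ab pu"
  shows "hseg C (map (\<lambda>i. vc C (ab!(i-1)) (hseg C aa (pobj C pt (xb!(i-1))) (xb!(i-1)) (xb!i))) [1..<Suc nu]) (fst pu) 0 nu
   = vc C (hseg C ab (fst pu) 0 nu) (hseg C aa (fst pt) 0 nt)"
proof -
  define A where "A i = hseg C aa (pobj C pt (xb!i)) (xb!i) (xb!Suc i)" for i
  have l: "map (\<lambda>i. vc C (ab!(i-1)) (hseg C aa (pobj C pt (xb!(i-1))) (xb!(i-1)) (xb!i))) [1..<Suc nu]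
      = map (\<lambda>i. vc C (ab!i) (A i)) [0..<nu]"
    by (rule nth_equalityI) (auto simp: A_def nth_upt simp del: upt_Suc)
  note Fa = icon_facts[OF ps pt xa ia]
  note Fb = icon_facts[OF pt pu xb ib]
  note Db = dmap_facts[OF xb]
  have x: "pobj C pt (xb!0) = fst pu" using Fb(4) path_facts(4)[OF pu] by auto
  have x0: "pobj C pt (xb!0) = fst pt" using Db path_facts(4)[OF pt] by auto
  have mA: "map A [0..<nu] = map (\<lambda>i. H.chain (pobj C pt (xb ! i)) (seg (xb ! i) (xb ! Suc i) aa)) [0..<nu]"
    by (simp add: A_def hseg_eq)
  have part: "H.chainok (pobj C pt (xb!0)) (map A [0..<nu]) (pobj C pt (xb!nu))
     \<and> H.chain (pobj C pt (xb!0)) (map A [0..<nu]) = H.chain (pobj C pt (xb!0)) (seg (xb!0) (xb!nu) aa)"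
    using H.partition[of aa nt "pobj C pt" 0 nu "\<lambda>i. xb!i"] Fa(1,2) path_facts(2)[OF pt] Db
    unfolding mA by auto
  have cA: "H.chain (fst pu) (map A [0..<nu]) = hseg C aa (fst pt) 0 nt"
    using part x x0 Db Fa(1) icon_full(5)[OF ps pt xa ia] by (simp add: seg_all)
  have mB: "map (\<lambda>i. ab ! i) [0..<nu] = ab" using Fb(1) map_nth[of ab] by simp
  have okB: "H.chainok (fst pu) (map (\<lambda>i. ab ! i) [0..<nu]) (pobj C pu nu)"
    using icon_full(1)[OF pt pu xb ib] mB by simp
  have conds: "\<forall>i<nu. A i \<in> Cl C \<and> ab ! i \<in> Cl C \<and> tgt2 C (A i) = src2 C (ab ! i)"
  proof (intro allI impI)
    fix i assume i: "i < nu"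
    have le: "xb!i \<le> xb!Suc i" "xb!Suc i \<le> nt" using Db i by auto
    show "A i \<in> Cl C \<and> ab ! i \<in> Cl C \<and> tgt2 C (A i) = src2 C (ab ! i)"
      using icon_hseg(3,4)[OF ps pt xa ia le] Fb(2,3) i by (auto simp: A_def)
  qed
  have "hseg C (map (\<lambda>i. vc C (ab!i) (A i)) [0..<nu]) (fst pu) 0 nu
      = H.chain (fst pu) (map (\<lambda>i. vc C (ab!i) (A i)) [0..<nu])"
    by (simp add: hseg_eq seg_all)
  also have "\<dots> = vc C (H.chain (fst pu) (map (\<lambda>i. ab ! i) [0..<nu])) (H.chain (fst pu) (map A [0..<nu]))"
    using H_vc[OF conds _ okB] part x by auto
  also have "\<dots> = vc C (hseg C ab (fst pu) 0 nu) (hseg C aa (fst pt) 0 nt)"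
    using cA mB icon_full(5)[OF pt pu xb ib] by simp
  finally show ?thesis using l by simp
qed

lemma icon_hc:
  assumes ps: "is_path C ns ps" and pt: "is_path C nt pt" and xa: "is_dmap nt ns xa" and ia: "icon_path C ps xa aa pt"
    and ps': "is_path C ns' ps'" and pt': "is_path C nt' pt'" and xb: "is_dmap nt' ns' xb" and ib: "icon_path C ps' xb ab pt'"
    and o: "fst pt' = pobj C pt nt"
  shows "hseg C (aa @ ab) (fst pt) 0 (nt + nt') = hc C (hseg C ab (fst pt') 0 nt') (hseg C aa (fst pt) 0 nt)"
proof -
  have "hseg C (aa @ ab) (fst pt) 0 (nt + nt') = H.chain (fst pt) (aa @ ab)"
    using icon_facts(1)[OF ps pt xa ia] icon_facts(1)[OF ps' pt' xb ib] by (simp add: hseg_eq seg_all)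
  also have "\<dots> = hc C (H.chain (fst pt') ab) (H.chain (fst pt) aa)"
    using H.chain_append icon_full(1)[OF ps pt xa ia] icon_full(1)[OF ps' pt' xb ib] o by simp
  finally show ?thesis using icon_full(5)[OF ps pt xa ia] icon_full(5)[OF ps' pt' xb ib] by simp
qed

lemma hseg_id2:
  assumes p: "is_path C n p"
  shows "hseg C (map (id2 C) (snd p)) (fst p) 0 n = id2 C (pcomp C p)"
  using H_id2[OF pcomp_props(3)[OF p]] pcomp_props(2)[OF p] path_facts(3)[OF p]
  by (simp add: hseg_eq seg_all)

end

lemma sarr_acc[simp]: "a_n (n,p,r,m,q,s) = n" "a_p (n,p,r,m,q,s) = p" "a_r (n,p,r,m,q,s) = r"
  "a_m (n,p,r,m,q,s) = m" "a_q (n,p,r,m,q,s) = q" "a_s (n,p,r,m,q,s) = s"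
  by (simp_all add: a_n_def a_p_def a_r_def a_m_def a_q_def a_s_def)

lemma scell_acc[simp]: "c_src (f,g,x,al,y,be) = f" "c_tgt (f,g,x,al,y,be) = g" "c_xi (f,g,x,al,y,be) = x"
  "c_al (f,g,x,al,y,be) = al" "c_rho (f,g,x,al,y,be) = y" "c_be (f,g,x,al,y,be) = be"
  by (simp_all add: c_src_def c_tgt_def c_xi_def c_al_def c_rho_def c_be_def)

lemma prod_simps[simp]:
  "Ob (prodcat C D) = Ob C \<times> Ob D" "Ar (prodcat C D) = Ar C \<times> Ar D" "Cl (prodcat C D) = Cl C \<times> Cl D"
  "dom1 (prodcat C D) (c,d) = (dom1 C c, dom1 D d)" "cod1 (prodcat C D) (c,d) = (cod1 C c, cod1 D d)"
  "idn (prodcat C D) (x,y) = (idn C x, idn D y)"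
  "cmp (prodcat C D) (c',d') (c,d) = (cmp C c' c, cmp D d' d)"
  "src2 (prodcat C D) (a,b) = (src2 C a, src2 D b)" "tgt2 (prodcat C D) (a,b) = (tgt2 C a, tgt2 D b)"
  "id2 (prodcat C D) (c,d) = (id2 C c, id2 D d)"
  "vc (prodcat C D) (a',b') (a,b) = (vc C a' a, vc D b' b)"
  "hc (prodcat C D) (a',b') (a,b) = (hc C a' a, hc D b' b)"
  by (simp_all add: prodcat_def)

lemma sim_simps[simp]:
  "Ob (simcat C D) = Ob C \<times> Ob D" "Ar (simcat C D) = sim_arr C D" "Cl (simcat C D) = sim_cell C D"
  "dom1 (simcat C D) = sim_dom C D" "cod1 (simcat C D) = sim_cod C D" "idn (simcat C D) = sim_idn"
  "cmp (simcat C D) = sim_cmp" "src2 (simcat C D) = c_src" "tgt2 (simcat C D) = c_tgt"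
  "id2 (simcat C D) = sim_id2 C D" "vc (simcat C D) = sim_vc C D" "hc (simcat C D) = sim_hc"
  by (simp_all add: simcat_def)

lemma L_simps[simp]:
  "fob (Lfun C D) = id"
  "far (Lfun C D) f = (pcomp C (a_p f), pcomp D (a_q f))"
  "fcl (Lfun C D) a = (hseg C (c_al a) (fst (a_p (c_tgt a))) 0 (a_n (c_tgt a)),
                  hseg D (c_be a) (fst (a_q (c_tgt a))) 0 (a_m (c_tgt a)))"
  "funit (Lfun C D) x = (id2 C (idn C (fst x)), id2 D (idn D (snd x)))"
  "fcomp (Lfun C D) g f = (id2 C (cmp C (pcomp C (a_p g)) (pcomp C (a_p f))), id2 D (cmp D (pcomp D (a_q g)) (pcomp D (a_q f))))"
  by (simp_all add: Lfun_def prodcat_def split: prod.splits)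

lemma pcomp_nil[simp]: "pcomp C (x, []) = idn C x"
  by (simp add: pcomp_def pseg_def pobj_def)

lemma sim_arrD: "f \<in> sim_arr C D \<Longrightarrow> is_path C (a_n f) (a_p f) \<and> is_path D (a_m f) (a_q f) \<and>
    shuffle (a_n f) (a_m f) (a_r f) (a_s f)"
  by (simp add: sim_arr_def)

lemma sim_cellD: "a \<in> sim_cell C D \<Longrightarrow>
   is_path C (a_n (c_src a)) (a_p (c_src a)) \<and> is_path D (a_m (c_src a)) (a_q (c_src a)) \<and>
   is_path C (a_n (c_tgt a)) (a_p (c_tgt a)) \<and> is_path D (a_m (c_tgt a)) (a_q (c_tgt a)) \<and>
   is_dmap (a_n (c_tgt a)) (a_n (c_src a)) (c_xi a) \<and> is_dmap (a_m (c_tgt a)) (a_m (c_src a)) (c_rho a) \<and>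
   icon_path C (a_p (c_src a)) (c_xi a) (c_al a) (a_p (c_tgt a)) \<and>
   icon_path D (a_q (c_src a)) (c_rho a) (c_be a) (a_q (c_tgt a)) \<and>
   sim_dom C D (c_src a) = sim_dom C D (c_tgt a) \<and> sim_cod C D (c_src a) = sim_cod C D (c_tgt a) \<and>
   c_src a \<in> sim_arr C D \<and> c_tgt a \<in> sim_arr C D"
  by (simp add: sim_cell_def sim_arr_def)

locale tc2 = CC: tc C + DD: tc D for C :: "('o1,'a1,'b1) tcat" and D :: "('o2,'a2,'b2) tcat"
begin

lemma L_far:
  assumes f: "f \<in> sim_arr C D"
  shows "far (Lfun C D) f \<in> Ar (prodcat C D) \<and> dom1 (prodcat C D) (far (Lfun C D) f) = fob (Lfun C D) (dom1 (simcat C D) f)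
     \<and> cod1 (prodcat C D) (far (Lfun C D) f) = fob (Lfun C D) (cod1 (simcat C D) f)"
  using CC.pcomp_props(1)[of "a_n f" "a_p f"] DD.pcomp_props(1)[of "a_m f" "a_q f"] sim_arrD[OF f]
  by (simp add: sim_dom_def sim_cod_def)

lemma L_fcl:
  assumes a: "a \<in> sim_cell C D"
  shows "fcl (Lfun C D) a \<in> Cl (prodcat C D) \<and> src2 (prodcat C D) (fcl (Lfun C D) a) = far (Lfun C D) (src2 (simcat C D) a)
     \<and> tgt2 (prodcat C D) (fcl (Lfun C D) a) = far (Lfun C D) (tgt2 (simcat C D) a)"
proof -
  note S = sim_cellD[OF a]
  note I1 = CC.icon_full[of "a_n (c_src a)" "a_p (c_src a)" "a_n (c_tgt a)" "a_p (c_tgt a)" "c_xi a" "c_al a"]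
  note I2 = DD.icon_full[of "a_m (c_src a)" "a_q (c_src a)" "a_m (c_tgt a)" "a_q (c_tgt a)" "c_rho a" "c_be a"]
  show ?thesis using S I1 I2 by simp
qed

lemma L_id2:
  assumes f: "f \<in> sim_arr C D"
  shows "fcl (Lfun C D) (id2 (simcat C D) f) = id2 (prodcat C D) (far (Lfun C D) f)"
  using CC.hseg_id2[of "a_n f" "a_p f"] DD.hseg_id2[of "a_m f" "a_q f"] sim_arrD[OF f] by (simp add: sim_id2_def)

lemma L_vc:
  assumes a: "a \<in> sim_cell C D" and b: "b \<in> sim_cell C D" and ab: "c_tgt a = c_src b"
  shows "fcl (Lfun C D) (vc (simcat C D) b a) = vc (prodcat C D) (fcl (Lfun C D) b) (fcl (Lfun C D) a)"
proof -
  note Sa = sim_cellD[OF a] and Sb = sim_cellD[OF b]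
  have 1: "hseg C (map (\<lambda>i. vc C (c_al b ! (i-1)) (hseg C (c_al a) (pobj C (a_p (c_tgt a)) (c_xi b ! (i-1))) (c_xi b ! (i-1)) (c_xi b ! i))) [1..<Suc (a_n (c_tgt b))]) (fst (a_p (c_tgt b))) 0 (a_n (c_tgt b))
    = vc C (hseg C (c_al b) (fst (a_p (c_tgt b))) 0 (a_n (c_tgt b))) (hseg C (c_al a) (fst (a_p (c_tgt a))) 0 (a_n (c_tgt a)))"
    by (rule CC.icon_vc) (use Sa Sb ab in auto)
  have 2: "hseg D (map (\<lambda>i. vc D (c_be b ! (i-1)) (hseg D (c_be a) (pobj D (a_q (c_tgt a)) (c_rho b ! (i-1))) (c_rho b ! (i-1)) (c_rho b ! i))) [1..<Suc (a_m (c_tgt b))]) (fst (a_q (c_tgt b))) 0 (a_m (c_tgt b))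
    = vc D (hseg D (c_be b) (fst (a_q (c_tgt b))) 0 (a_m (c_tgt b))) (hseg D (c_be a) (fst (a_q (c_tgt a))) 0 (a_m (c_tgt a)))"
    by (rule DD.icon_vc) (use Sa Sb ab in auto)
  show ?thesis using 1 2 by (simp add: sim_vc_def)
qed

end

lemma sim_cmp_acc[simp]:
  "a_n (sim_cmp g f) = a_n f + a_n g" "a_p (sim_cmp g f) = (fst (a_p f), snd (a_p f) @ snd (a_p g))"
  "a_m (sim_cmp g f) = a_m f + a_m g" "a_q (sim_cmp g f) = (fst (a_q f), snd (a_q f) @ snd (a_q g))"
  "a_r (sim_cmp g f) = a_r f @ map (\<lambda>i. i + a_n f) (tl (a_r g))"
  "a_s (sim_cmp g f) = a_s f @ map (\<lambda>i. i + a_m f) (tl (a_s g))"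
  by (simp_all add: sim_cmp_def)

lemma sim_idn_acc[simp]: "a_n (sim_idn x) = 0" "a_p (sim_idn x) = (fst x, [])"
  "a_m (sim_idn x) = 0" "a_q (sim_idn x) = (snd x, [])" "a_r (sim_idn x) = [0]" "a_s (sim_idn x) = [0]"
  by (simp_all add: sim_idn_def)

lemma sim_hc_acc[simp]: "c_src (sim_hc b a) = sim_cmp (c_src b) (c_src a)" "c_tgt (sim_hc b a) = sim_cmp (c_tgt b) (c_tgt a)"
  "c_al (sim_hc b a) = c_al a @ c_al b" "c_be (sim_hc b a) = c_be a @ c_be b"
  by (simp_all add: sim_hc_def)

context tc
begin
lemma pcomp_link:
  assumes "is_path C n p" "is_path C n' p'" "fst p' = pobj C p n"
  shows "cod1 C (pcomp C p) = dom1 C (pcomp C p')"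
  using pcomp_props(1)[OF assms(1)] pcomp_props(1)[OF assms(2)] assms(3) by simp
end

context tc2
begin

lemma link:
  assumes f: "f \<in> sim_arr C D" and g: "g \<in> sim_arr C D" and fg: "sim_cod C D f = sim_dom C D g"
  shows "fst (a_p g) = pobj C (a_p f) (a_n f)" "fst (a_q g) = pobj D (a_q f) (a_m f)"
    "cod1 C (pcomp C (a_p f)) = dom1 C (pcomp C (a_p g))" "cod1 D (pcomp D (a_q f)) = dom1 D (pcomp D (a_q g))"
    "far (Lfun C D) (sim_cmp g f) = cmp (prodcat C D) (far (Lfun C D) g) (far (Lfun C D) f)"
proof -
  show 1: "fst (a_p g) = pobj C (a_p f) (a_n f)" "fst (a_q g) = pobj D (a_q f) (a_m f)"
    using fg by (auto simp: sim_cod_def sim_dom_def)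
  note F = sim_arrD[OF f] and G = sim_arrD[OF g]
  show "cod1 C (pcomp C (a_p f)) = dom1 C (pcomp C (a_p g))" using CC.pcomp_link F G 1 by blast
  show "cod1 D (pcomp D (a_q f)) = dom1 D (pcomp D (a_q g))" using DD.pcomp_link F G 1 by blast
  show "far (Lfun C D) (sim_cmp g f) = cmp (prodcat C D) (far (Lfun C D) g) (far (Lfun C D) f)"
    using CC.pcomp_concat[of "a_n f" "a_p f" "a_n g" "a_p g"] DD.pcomp_concat[of "a_m f" "a_q f" "a_m g" "a_q g"] F G 1
    by simp
qed

lemma L_unit:
  assumes x: "x \<in> Ob (simcat C D)"
  shows "funit (Lfun C D) x \<in> Cl (prodcat C D) \<and> src2 (prodcat C D) (funit (Lfun C D) x) = idn (prodcat C D) (fob (Lfun C D) x) \<and>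
        tgt2 (prodcat C D) (funit (Lfun C D) x) = far (Lfun C D) (idn (simcat C D) x)"
  using x CC.idn_ar CC.id2_cl DD.idn_ar DD.id2_cl by (cases x) auto

lemma L_fcomp:
  assumes f: "f \<in> sim_arr C D" and g: "g \<in> sim_arr C D" and fg: "sim_cod C D f = sim_dom C D g"
  shows "fcomp (Lfun C D) g f \<in> Cl (prodcat C D) \<and> src2 (prodcat C D) (fcomp (Lfun C D) g f) = cmp (prodcat C D) (far (Lfun C D) g) (far (Lfun C D) f) \<and>
        tgt2 (prodcat C D) (fcomp (Lfun C D) g f) = far (Lfun C D) (cmp (simcat C D) g f)"
proof -
  note F = sim_arrD[OF f] and G = sim_arrD[OF g] and Lk = link[OF f g fg]
  have c1: "cmp C (pcomp C (a_p g)) (pcomp C (a_p f)) \<in> Ar C"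
    using CC.cmp_ar CC.pcomp_props(1) F G Lk by blast
  have c2: "cmp D (pcomp D (a_q g)) (pcomp D (a_q f)) \<in> Ar D"
    using DD.cmp_ar DD.pcomp_props(1) F G Lk by blast
  show ?thesis using CC.id2_cl[OF c1] DD.id2_cl[OF c2] Lk(5) by simp
qed

lemma L_hc:
  assumes a: "a \<in> sim_cell C D" and b: "b \<in> sim_cell C D" and ab: "sim_cod C D (c_src a) = sim_dom C D (c_src b)"
  shows "vc (prodcat C D) (fcomp (Lfun C D) (c_tgt b) (c_tgt a)) (hc (prodcat C D) (fcl (Lfun C D) b) (fcl (Lfun C D) a))
       = vc (prodcat C D) (fcl (Lfun C D) (sim_hc b a)) (fcomp (Lfun C D) (c_src b) (c_src a))"
proof -
  note Sa = sim_cellD[OF a] and Sb = sim_cellD[OF b]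
  have ab': "sim_cod C D (c_tgt a) = sim_dom C D (c_tgt b)" using Sa Sb ab by simp
  note Lk = link[of "c_tgt a" "c_tgt b", OF _ _ ab'] link[of "c_src a" "c_src b", OF _ _ ab]
  note Ia = CC.icon_full[of "a_n (c_src a)" "a_p (c_src a)" "a_n (c_tgt a)" "a_p (c_tgt a)" "c_xi a" "c_al a"]
  note Ib = CC.icon_full[of "a_n (c_src b)" "a_p (c_src b)" "a_n (c_tgt b)" "a_p (c_tgt b)" "c_xi b" "c_al b"]
  note Ja = DD.icon_full[of "a_m (c_src a)" "a_q (c_src a)" "a_m (c_tgt a)" "a_q (c_tgt a)" "c_rho a" "c_be a"]
  note Jb = DD.icon_full[of "a_m (c_src b)" "a_q (c_src b)" "a_m (c_tgt b)" "a_q (c_tgt b)" "c_rho b" "c_be b"]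
  let ?ga = "hseg C (c_al a) (fst (a_p (c_tgt a))) 0 (a_n (c_tgt a))"
  let ?gb = "hseg C (c_al b) (fst (a_p (c_tgt b))) 0 (a_n (c_tgt b))"
  let ?da = "hseg D (c_be a) (fst (a_q (c_tgt a))) 0 (a_m (c_tgt a))"
  let ?db = "hseg D (c_be b) (fst (a_q (c_tgt b))) 0 (a_m (c_tgt b))"
  have hcC: "hseg C (c_al a @ c_al b) (fst (a_p (c_tgt a))) 0 (a_n (c_tgt a) + a_n (c_tgt b)) = hc C ?gb ?ga"
    by (rule CC.icon_hc[of "a_n (c_src a)" "a_p (c_src a)" "a_n (c_tgt a)" "a_p (c_tgt a)" "c_xi a" "c_al a" "a_n (c_src b)" "a_p (c_src b)" "a_n (c_tgt b)" "a_p (c_tgt b)" "c_xi b" "c_al b"]) (use Sa Sb Lk in auto)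
  have hcD: "hseg D (c_be a @ c_be b) (fst (a_q (c_tgt a))) 0 (a_m (c_tgt a) + a_m (c_tgt b)) = hc D ?db ?da"
    by (rule DD.icon_hc[of "a_m (c_src a)" "a_q (c_src a)" "a_m (c_tgt a)" "a_q (c_tgt a)" "c_rho a" "c_be a" "a_m (c_src b)" "a_q (c_src b)" "a_m (c_tgt b)" "a_q (c_tgt b)" "c_rho b" "c_be b"]) (use Sa Sb Lk in auto)
  have lC: "cod1 C (src2 C ?ga) = dom1 C (src2 C ?gb)" using Ia Ib Sa Sb Lk by auto
  have lD: "cod1 D (src2 D ?da) = dom1 D (src2 D ?db)" using Ja Jb Sa Sb Lk by auto
  have hC: "hc C ?gb ?ga \<in> Cl C \<and> src2 C (hc C ?gb ?ga) = cmp C (pcomp C (a_p (c_src b))) (pcomp C (a_p (c_src a)))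
      \<and> tgt2 C (hc C ?gb ?ga) = cmp C (pcomp C (a_p (c_tgt b))) (pcomp C (a_p (c_tgt a)))"
    using CC.hc_cl[OF _ _ lC] Ia Ib Sa Sb by auto
  have hD: "hc D ?db ?da \<in> Cl D \<and> src2 D (hc D ?db ?da) = cmp D (pcomp D (a_q (c_src b))) (pcomp D (a_q (c_src a)))
      \<and> tgt2 D (hc D ?db ?da) = cmp D (pcomp D (a_q (c_tgt b))) (pcomp D (a_q (c_tgt a)))"
    using DD.hc_cl[OF _ _ lD] Ja Jb Sa Sb by auto
  show ?thesis
    using hcC hcD hC hD CC.vc_unitL[of "hc C ?gb ?ga"] CC.vc_unitR[of "hc C ?gb ?ga"]
      DD.vc_unitL[of "hc D ?db ?da"] DD.vc_unitR[of "hc D ?db ?da"]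
    by simp
qed

end

context tc
begin
lemma id2_assoc:
  assumes "f \<in> Ar C" "g \<in> Ar C" "h \<in> Ar C" "cod1 C f = dom1 C g" "cod1 C g = dom1 C h"
  shows "vc C (id2 C (cmp C h (cmp C g f))) (hc C (id2 C h) (id2 C (cmp C g f)))
       = vc C (id2 C (cmp C (cmp C h g) f)) (hc C (id2 C (cmp C h g)) (id2 C f))"
proof -
  have gf: "cmp C g f \<in> Ar C" "cod1 C (cmp C g f) = dom1 C h" using cmp_ar assms by auto
  have hg: "cmp C h g \<in> Ar C" "dom1 C (cmp C h g) = cod1 C f" using cmp_ar assms by auto
  have "hc C (id2 C h) (id2 C (cmp C g f)) = id2 C (cmp C h (cmp C g f))" using id2_cmp gf assms by auto
  moreover have "hc C (id2 C (cmp C h g)) (id2 C f) = id2 C (cmp C (cmp C h g) f)" using id2_cmp hg assms by auto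
  moreover have "cmp C h (cmp C g f) \<in> Ar C" using cmp_ar gf assms by auto
  ultimately show ?thesis using cmp_assoc assms vc_id2_id2 by simp
qed

lemma id2_units:
  assumes "f \<in> Ar C"
  shows "vc C (id2 C (cmp C f (idn C (dom1 C f)))) (hc C (id2 C f) (id2 C (idn C (dom1 C f)))) = id2 C f"
    "vc C (id2 C (cmp C (idn C (cod1 C f)) f)) (hc C (id2 C (idn C (cod1 C f))) (id2 C f)) = id2 C f"
proof -
  have o: "dom1 C f \<in> Ob C" "cod1 C f \<in> Ob C" using ar_ob assms by auto
  show "vc C (id2 C (cmp C f (idn C (dom1 C f)))) (hc C (id2 C f) (id2 C (idn C (dom1 C f)))) = id2 C f"
    using id2_cmp[of "idn C (dom1 C f)" f] idn_ar[OF o(1)] assms cmp_unitR vc_id2_id2 by simp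
  show "vc C (id2 C (cmp C (idn C (cod1 C f)) f)) (hc C (id2 C (idn C (cod1 C f))) (id2 C f)) = id2 C f"
    using id2_cmp[of f "idn C (cod1 C f)"] idn_ar[OF o(2)] assms cmp_unitL vc_id2_id2 by simp
qed
end

context tc2
begin

lemma L_assoc:
  assumes f: "f \<in> sim_arr C D" and g: "g \<in> sim_arr C D" and h: "h \<in> sim_arr C D"
    and fg: "sim_cod C D f = sim_dom C D g" and gh: "sim_cod C D g = sim_dom C D h"
  shows "vc (prodcat C D) (fcomp (Lfun C D) h (sim_cmp g f)) (hc (prodcat C D) (id2 (prodcat C D) (far (Lfun C D) h)) (fcomp (Lfun C D) g f))
          = vc (prodcat C D) (fcomp (Lfun C D) (sim_cmp h g) f) (hc (prodcat C D) (fcomp (Lfun C D) h g) (id2 (prodcat C D) (far (Lfun C D) f)))"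
proof -
  note L1 = link[OF f g fg] and L2 = link[OF g h gh]
  note F = sim_arrD[OF f] and G = sim_arrD[OF g] and H = sim_arrD[OF h]
  have e1: "pcomp C (fst (a_p f), snd (a_p f) @ snd (a_p g)) = cmp C (pcomp C (a_p g)) (pcomp C (a_p f))"
     "pcomp D (fst (a_q f), snd (a_q f) @ snd (a_q g)) = cmp D (pcomp D (a_q g)) (pcomp D (a_q f))"
    using L1(5) by simp_all
  have e2: "pcomp C (fst (a_p g), snd (a_p g) @ snd (a_p h)) = cmp C (pcomp C (a_p h)) (pcomp C (a_p g))"
     "pcomp D (fst (a_q g), snd (a_q g) @ snd (a_q h)) = cmp D (pcomp D (a_q h)) (pcomp D (a_q g))"
    using L2(5) by simp_all
  show ?thesis
    using e1 e2 CC.id2_assoc[of "pcomp C (a_p f)" "pcomp C (a_p g)" "pcomp C (a_p h)"]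
      DD.id2_assoc[of "pcomp D (a_q f)" "pcomp D (a_q g)" "pcomp D (a_q h)"]
      CC.pcomp_props(1)[of "a_n f" "a_p f"] CC.pcomp_props(1)[of "a_n g" "a_p g"] CC.pcomp_props(1)[of "a_n h" "a_p h"]
      DD.pcomp_props(1)[of "a_m f" "a_q f"] DD.pcomp_props(1)[of "a_m g" "a_q g"] DD.pcomp_props(1)[of "a_m h" "a_q h"]
      F G H L1(3,4) L2(3,4)
    by simp
qed

lemma L_units:
  assumes f: "f \<in> sim_arr C D"
  shows "vc (prodcat C D) (fcomp (Lfun C D) f (sim_idn (sim_dom C D f))) (hc (prodcat C D) (id2 (prodcat C D) (far (Lfun C D) f)) (funit (Lfun C D) (sim_dom C D f))) = id2 (prodcat C D) (far (Lfun C D) f)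
     \<and> vc (prodcat C D) (fcomp (Lfun C D) (sim_idn (sim_cod C D f)) f) (hc (prodcat C D) (funit (Lfun C D) (sim_cod C D f)) (id2 (prodcat C D) (far (Lfun C D) f))) = id2 (prodcat C D) (far (Lfun C D) f)"
proof -
  note F = sim_arrD[OF f]
  note P1 = CC.pcomp_props(1)[of "a_n f" "a_p f"] and P2 = DD.pcomp_props(1)[of "a_m f" "a_q f"]
  show ?thesis
    using CC.id2_units[of "pcomp C (a_p f)"] DD.id2_units[of "pcomp D (a_q f)"] P1 P2 F
    by (simp add: sim_dom_def sim_cod_def)
qed

lemma L_strict: "strict_functor (simcat C D) (prodcat C D) (Lfun C D)"
proof -
  have c1: "\<forall>x\<in>Ob (simcat C D). fob (Lfun C D) x \<in> Ob (prodcat C D)" by simp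
  have c2: "\<forall>f\<in>Ar (simcat C D). far (Lfun C D) f \<in> Ar (prodcat C D) \<and> dom1 (prodcat C D) (far (Lfun C D) f) = fob (Lfun C D) (dom1 (simcat C D) f) \<and> cod1 (prodcat C D) (far (Lfun C D) f) = fob (Lfun C D) (cod1 (simcat C D) f)"
    using L_far by simp
  have c3: "\<forall>a\<in>Cl (simcat C D). fcl (Lfun C D) a \<in> Cl (prodcat C D) \<and> src2 (prodcat C D) (fcl (Lfun C D) a) = far (Lfun C D) (src2 (simcat C D) a) \<and> tgt2 (prodcat C D) (fcl (Lfun C D) a) = far (Lfun C D) (tgt2 (simcat C D) a)"
    unfolding sim_simps(3) using L_fcl by blast
  have c4: "\<forall>f\<in>Ar (simcat C D). fcl (Lfun C D) (id2 (simcat C D) f) = id2 (prodcat C D) (far (Lfun C D) f)"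
    unfolding sim_simps(2) using L_id2 by blast
  have c5: "\<forall>a\<in>Cl (simcat C D). \<forall>b\<in>Cl (simcat C D). tgt2 (simcat C D) a = src2 (simcat C D) b \<longrightarrow> fcl (Lfun C D) (vc (simcat C D) b a) = vc (prodcat C D) (fcl (Lfun C D) b) (fcl (Lfun C D) a)"
    using L_vc by simp
  have c6: "\<forall>x\<in>Ob (simcat C D). funit (Lfun C D) x \<in> Cl (prodcat C D) \<and> src2 (prodcat C D) (funit (Lfun C D) x) = idn (prodcat C D) (fob (Lfun C D) x) \<and>
        tgt2 (prodcat C D) (funit (Lfun C D) x) = far (Lfun C D) (idn (simcat C D) x)"
    using L_unit by blast
  have c7: "\<forall>f\<in>Ar (simcat C D). \<forall>g\<in>Ar (simcat C D). cod1 (simcat C D) f = dom1 (simcat C D) g \<longrightarrow>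
        fcomp (Lfun C D) g f \<in> Cl (prodcat C D) \<and> src2 (prodcat C D) (fcomp (Lfun C D) g f) = cmp (prodcat C D) (far (Lfun C D) g) (far (Lfun C D) f) \<and>
        tgt2 (prodcat C D) (fcomp (Lfun C D) g f) = far (Lfun C D) (cmp (simcat C D) g f)"
    using L_fcomp by simp
  have c8: "\<forall>a\<in>Cl (simcat C D). \<forall>b\<in>Cl (simcat C D). cod1 (simcat C D) (src2 (simcat C D) a) = dom1 (simcat C D) (src2 (simcat C D) b) \<longrightarrow>
        vc (prodcat C D) (fcomp (Lfun C D) (tgt2 (simcat C D) b) (tgt2 (simcat C D) a)) (hc (prodcat C D) (fcl (Lfun C D) b) (fcl (Lfun C D) a))
          = vc (prodcat C D) (fcl (Lfun C D) (hc (simcat C D) b a)) (fcomp (Lfun C D) (src2 (simcat C D) b) (src2 (simcat C D) a))"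
    using L_hc by simp
  have c9: "\<forall>f\<in>Ar (simcat C D). \<forall>g\<in>Ar (simcat C D). \<forall>h\<in>Ar (simcat C D). cod1 (simcat C D) f = dom1 (simcat C D) g \<longrightarrow> cod1 (simcat C D) g = dom1 (simcat C D) h \<longrightarrow>
        vc (prodcat C D) (fcomp (Lfun C D) h (cmp (simcat C D) g f)) (hc (prodcat C D) (id2 (prodcat C D) (far (Lfun C D) h)) (fcomp (Lfun C D) g f))
          = vc (prodcat C D) (fcomp (Lfun C D) (cmp (simcat C D) h g) f) (hc (prodcat C D) (fcomp (Lfun C D) h g) (id2 (prodcat C D) (far (Lfun C D) f)))"
    using L_assoc by simp
  have c10: "\<forall>f\<in>Ar (simcat C D).
        vc (prodcat C D) (fcomp (Lfun C D) f (idn (simcat C D) (dom1 (simcat C D) f))) (hc (prodcat C D) (id2 (prodcat C D) (far (Lfun C D) f)) (funit (Lfun C D) (dom1 (simcat C D) f))) = id2 (prodcat C D) (far (Lfun C D) f) \<and>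
        vc (prodcat C D) (fcomp (Lfun C D) (idn (simcat C D) (cod1 (simcat C D) f)) f) (hc (prodcat C D) (funit (Lfun C D) (cod1 (simcat C D) f)) (id2 (prodcat C D) (far (Lfun C D) f))) = id2 (prodcat C D) (far (Lfun C D) f)"
    using L_units by simp
  have c11: "\<forall>x\<in>Ob (simcat C D). far (Lfun C D) (idn (simcat C D) x) = idn (prodcat C D) (fob (Lfun C D) x) \<and> funit (Lfun C D) x = id2 (prodcat C D) (idn (prodcat C D) (fob (Lfun C D) x))"
    by auto
  have c12: "\<forall>f\<in>Ar (simcat C D). \<forall>g\<in>Ar (simcat C D). cod1 (simcat C D) f = dom1 (simcat C D) g \<longrightarrow>
        far (Lfun C D) (cmp (simcat C D) g f) = cmp (prodcat C D) (far (Lfun C D) g) (far (Lfun C D) f) \<and>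
        fcomp (Lfun C D) g f = id2 (prodcat C D) (cmp (prodcat C D) (far (Lfun C D) g) (far (Lfun C D) f))"
    using link(5) by simp
  show ?thesis unfolding strict_functor_def lax_functor_def
    by (intro conjI c1 c2 c3 c4 c5 c6 c7 c8 c9 c10 c11 c12)
qed

end

lemma Rarr_acc[simp]: "a_n (Rarr C D (c,d)) = 1" "a_p (Rarr C D (c,d)) = (dom1 C c, [c])"
  "a_r (Rarr C D (c,d)) = [0,0,1]" "a_m (Rarr C D (c,d)) = 1" "a_q (Rarr C D (c,d)) = (dom1 D d, [d])"
  "a_s (Rarr C D (c,d)) = [0,1,1]"
  by (simp_all add: Rarr_def)

lemma R_simps1[simp]: "fob (Rfun C D) x = x" by (simp add: Rfun_def)
lemma R_simps2[simp]: "far (Rfun C D) f = Rarr C D f" by (simp add: Rfun_def)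
lemma R_simps3[simp]: "fcl (Rfun C D) (g,d) = (Rarr C D (src2 C g, src2 D d), Rarr C D (tgt2 C g, tgt2 D d), [0,1], [g], [0,1], [d])"
  by (simp add: Rfun_def)
lemma R_simps4[simp]: "funit (Rfun C D) (x,y) = (sim_idn (x,y), Rarr C D (idn C x, idn D y), [0,0], [id2 C (idn C x)], [0,0], [id2 D (idn D y)])"
  by (simp add: Rfun_def)
lemma R_simps5[simp]: "fcomp (Rfun C D) (c',d') (c,d) = (sim_cmp (Rarr C D (c',d')) (Rarr C D (c,d)), Rarr C D (cmp C c' c, cmp D d' d),
                  [0,2], [id2 C (cmp C c' c)], [0,2], [id2 D (cmp D d' d)])"
  by (simp add: Rfun_def)

lemma hseg1[simp]: "hseg C [a] x 0 1 = hc C a (id2 C (idn C x))" by (simp add: hseg_def)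
lemma hseg2[simp]: "hseg C [a,b] x 0 2 = hc C b (hc C a (id2 C (idn C x)))" by (simp add: hseg_def numeral_2_eq_2)
lemma hseg0[simp]: "hseg C as x 0 0 = id2 C (idn C x)" by (simp add: hseg_def)
lemma pobj0[simp]: "pobj C (x, fs) 0 = x" by (simp add: pobj_def)
lemma pobjS[simp]: "pobj C (x, fs) (Suc i) = cod1 C (fs ! i)" by (simp add: pobj_def)
lemma pobj2[simp]: "pobj C (x, fs) 2 = cod1 C (fs ! 1)" by (simp add: pobj_def)
lemma pseg1[simp]: "pseg C (x,[f]) 0 1 = cmp C f (idn C x)" by (simp add: pseg_def)
lemma pseg2[simp]: "pseg C (x,[f,g]) 0 2 = cmp C g (cmp C f (idn C x))" by (simp add: pseg_def numeral_2_eq_2)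
lemma pseg00[simp]: "pseg C (x,[]) 0 0 = idn C x" by (simp add: pseg_def)
lemma pseg1'[simp]: "pseg C (x,[f]) 0 (Suc 0) = cmp C f (idn C x)" by (simp add: pseg_def)
lemma hseg1'[simp]: "hseg C [a] x 0 (Suc 0) = hc C a (id2 C (idn C x))" by (simp add: hseg_def)
lemma pcomp1[simp]: "pcomp C (x,[f]) = cmp C f (idn C x)" by (simp add: pcomp_def pseg_def)

lemma finite_preim: "finite (preim r v)" by (simp add: preim_def)

lemma minmax:
  assumes "a < length r" "r ! a = v" "b < length s" "s ! b = w" "a \<le> b"
  shows "Min (preim r v) \<le> Max (preim s w)"
proof -
  have "a \<in> preim r v" "b \<in> preim s w" using assms by (auto simp: preim_def)
  then show ?thesis using Min_le[OF finite_preim] Max_ge[OF finite_preim] assms(5) by (meson le_trans)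
qed

lemma le2_cases: "(i::nat) \<le> 1 + 1 \<Longrightarrow> i = 0 \<or> i = 1 \<or> i = 2" by (auto simp: le_Suc_eq)

lemma shuffle11: "shuffle 1 1 [0,0,1] [0,1,1]"
  by (auto simp: shuffle_def is_dmap_def less_Suc_eq)
lemma shuffle00: "shuffle 0 0 [0] [0]"
  by (auto simp: shuffle_def is_dmap_def)
lemma shuffle22: "shuffle 2 2 [0,0,1,1,2] [0,1,1,2,2]"
  by (auto simp: shuffle_def is_dmap_def less_Suc_eq numeral_eq_Suc)

context tc
begin
lemma path1: "c \<in> Ar C \<Longrightarrow> is_path C 1 (dom1 C c, [c])"
  using ar_ob by (auto simp: is_path_def)
lemma path0: "x \<in> Ob C \<Longrightarrow> is_path C 0 (x, [])"
  by (auto simp: is_path_def)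
lemma path2: "c \<in> Ar C \<Longrightarrow> c' \<in> Ar C \<Longrightarrow> cod1 C c = dom1 C c' \<Longrightarrow> is_path C 2 (dom1 C c, [c, c'])"
  using ar_ob by (auto simp: is_path_def less_Suc_eq numeral_eq_Suc)
end

context tc2
begin

lemma Rarr_arr:
  assumes "c \<in> Ar C" "d \<in> Ar D"
  shows "Rarr C D (c,d) \<in> sim_arr C D" "sim_dom C D (Rarr C D (c,d)) = (dom1 C c, dom1 D d)"
    "sim_cod C D (Rarr C D (c,d)) = (cod1 C c, cod1 D d)"
  using CC.path1 DD.path1 assms shuffle11
  by (auto simp: sim_arr_def sim_dom_def sim_cod_def)

lemma R_far: "\<forall>f\<in>Ar (prodcat C D). far (Rfun C D) f \<in> Ar (simcat C D) \<and> dom1 (simcat C D) (far (Rfun C D) f) = fob (Rfun C D) (dom1 (prodcat C D) f) \<and> cod1 (simcat C D) (far (Rfun C D) f) = fob (Rfun C D) (cod1 (prodcat C D) f)"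
  using Rarr_arr by auto

lemma R_fcl_cell:
  assumes g: "g \<in> Cl C" and d: "d \<in> Cl D"
  shows "fcl (Rfun C D) (g,d) \<in> sim_cell C D"
proof -
  note G = CC.cl_ar[OF g] and Dd = DD.cl_ar[OF d]
  have mm: "\<forall>i\<le>1 + 1. Min (preim [0,0,1] ([0,1] ! ([0,0,1] ! i))) \<le> Max (preim [0,1,1] ([0,1] ! ([0,1,1] ! i)))"
  proof (intro allI impI)
    fix i :: nat assume "i \<le> 1 + 1"
    then consider "i = 0" | "i = 1" | "i = 2" using le2_cases by blast
    then show "Min (preim [0,0,1] ([0,1] ! ([0,0,1] ! i))) \<le> Max (preim [0,1,1] ([0,1] ! ([0,1,1] ! i)))"
      by cases (rule minmax[where a=i and b=i]; simp)+
  qed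
  have ip1: "icon_path C (dom1 C (src2 C g), [src2 C g]) [0,1] [g] (dom1 C (tgt2 C g), [tgt2 C g])"
    using G g CC.cmp_unitR[of "src2 C g"] by (auto simp: icon_path_def le_Suc_eq)
  have ip2: "icon_path D (dom1 D (src2 D d), [src2 D d]) [0,1] [d] (dom1 D (tgt2 D d), [tgt2 D d])"
    using Dd d DD.cmp_unitR[of "src2 D d"] by (auto simp: icon_path_def le_Suc_eq)
  show ?thesis
    using Rarr_arr[of "src2 C g" "src2 D d"] Rarr_arr[of "tgt2 C g" "tgt2 D d"] G Dd mm ip1 ip2
    by (simp add: sim_cell_def is_dmap_def)
qed

end

lemma Rcmp: "sim_cmp (Rarr C D (c',d')) (Rarr C D (c,d)) = (2, (dom1 C c, [c,c']), [0,0,1,1,2], 2, (dom1 D d, [d,d']), [0,1,1,2,2])"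
  by (simp add: sim_cmp_def Rarr_def)

context tc
begin
lemma hcR: "a \<in> Cl C \<Longrightarrow> hc C a (id2 C (idn C (dom1 C (tgt2 C a)))) = a"
  using hc_unitR cl_ar by metis
lemma id2hcR: "f \<in> Ar C \<Longrightarrow> hc C (id2 C f) (id2 C (idn C (dom1 C f))) = id2 C f"
  using hc_unitR[of "id2 C f"] id2_cl by simp
lemma hc_id2: "f \<in> Ar C \<Longrightarrow> g \<in> Ar C \<Longrightarrow> cod1 C f = dom1 C g \<Longrightarrow> hc C (id2 C g) (id2 C f) = id2 C (cmp C g f)"
  using id2_cmp by simp
end

context tc2
begin

lemma R_funit_cell:
  assumes x: "x1 \<in> Ob C" "x2 \<in> Ob D"
  shows "funit (Rfun C D) (x1,x2) \<in> sim_cell C D"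
proof -
  note I1 = CC.idn_ar[OF x(1)] and I2 = DD.idn_ar[OF x(2)]
  have arr: "sim_idn (x1,x2) \<in> sim_arr C D"
    using CC.path0[OF x(1)] DD.path0[OF x(2)] shuffle00 by (simp add: sim_arr_def)
  have mm: "\<forall>i\<le>0 + 0. Min (preim [0] ([0,0] ! ([0,0,1] ! i))) \<le> Max (preim [0] ([0,0] ! ([0,1,1] ! i)))"
    by (intro allI impI, rule minmax[where a=0 and b=0]) (auto simp: nth_Cons')
  have mm': "\<forall>i\<le>1 + 1. Min (preim [0] ([0,0] ! ([0,0,1] ! i))) \<le> Max (preim [0] ([0,0] ! ([0,1,1] ! i)))"
  proof (intro allI impI)
    fix i :: nat assume "i \<le> 1 + 1"
    then consider "i = 0" | "i = 1" | "i = 2" using le2_cases by blast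
    then show "Min (preim [0] ([0,0] ! ([0,0,1] ! i))) \<le> Max (preim [0] ([0,0] ! ([0,1,1] ! i)))"
      by cases (rule minmax[where a=0 and b=0]; simp)+
  qed
  have ip1: "icon_path C (x1, []) [0,0] [id2 C (idn C x1)] (dom1 C (idn C x1), [idn C x1])"
    using I1 CC.id2_cl[of "idn C x1"] by (auto simp: icon_path_def le_Suc_eq)
  have ip2: "icon_path D (x2, []) [0,0] [id2 D (idn D x2)] (dom1 D (idn D x2), [idn D x2])"
    using I2 DD.id2_cl[of "idn D x2"] by (auto simp: icon_path_def le_Suc_eq)
  show ?thesis
    using arr Rarr_arr[of "idn C x1" "idn D x2"] I1 I2 mm' ip1 ip2
    by (simp add: sim_cell_def is_dmap_def sim_dom_def sim_cod_def)
qed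

lemma R_fcomp_cell:
  assumes c: "c \<in> Ar C" "c' \<in> Ar C" "cod1 C c = dom1 C c'" and d: "d \<in> Ar D" "d' \<in> Ar D" "cod1 D d = dom1 D d'"
  shows "fcomp (Rfun C D) (c',d') (c,d) \<in> sim_cell C D"
proof -
  note K1 = CC.cmp_ar[OF c] and K2 = DD.cmp_ar[OF d]
  have arr: "sim_cmp (Rarr C D (c',d')) (Rarr C D (c,d)) \<in> sim_arr C D"
    using CC.path2[OF c] DD.path2[OF d] shuffle22 by (simp add: sim_arr_def Rcmp)
  have mm: "\<forall>i\<le>1 + 1. Min (preim [0,0,1,1,2] ([0,2] ! ([0,0,1] ! i))) \<le> Max (preim [0,1,1,2,2] ([0,2] ! ([0,1,1] ! i)))"
  proof (intro allI impI)
    fix i :: nat assume "i \<le> 1 + 1"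
    then consider "i = 0" | "i = 1" | "i = 2" using le2_cases by blast
    then show "Min (preim [0,0,1,1,2] ([0,2] ! ([0,0,1] ! i))) \<le> Max (preim [0,1,1,2,2] ([0,2] ! ([0,1,1] ! i)))"
    proof cases
      case 1 then show ?thesis by (intro minmax[where a=0 and b=0]) simp_all
    next
      case 2 then show ?thesis by (intro minmax[where a=0 and b=3]) (simp_all add: numeral_eq_Suc)
    next
      case 3 then show ?thesis by (intro minmax[where a=4 and b=4]) (simp_all add: numeral_eq_Suc)
    qed
  qed
  have ip1: "icon_path C (dom1 C c, [c, c']) [0,2] [id2 C (cmp C c' c)] (dom1 C (cmp C c' c), [cmp C c' c])"
    using K1 CC.id2_cl[of "cmp C c' c"] CC.cmp_unitR[OF c(1)] c by (auto simp: icon_path_def le_Suc_eq)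
  have ip2: "icon_path D (dom1 D d, [d, d']) [0,2] [id2 D (cmp D d' d)] (dom1 D (cmp D d' d), [cmp D d' d])"
    using K2 DD.id2_cl[of "cmp D d' d"] DD.cmp_unitR[OF d(1)] d by (auto simp: icon_path_def le_Suc_eq)
  show ?thesis
    using arr Rarr_arr[of "cmp C c' c" "cmp D d' d"] K1 K2 mm ip1 ip2
    by (simp add: sim_cell_def is_dmap_def sim_dom_def sim_cod_def Rcmp)
qed

end

context tc2
begin

lemma R_id2:
  assumes "c \<in> Ar C" "d \<in> Ar D"
  shows "fcl (Rfun C D) (id2 (prodcat C D) (c,d)) = sim_id2 C D (Rarr C D (c,d))"
  using assms CC.id2_cl DD.id2_cl by (simp add: sim_id2_def)

lemma R_vc:
  assumes g: "g \<in> Cl C" "g' \<in> Cl C" "tgt2 C g = src2 C g'" and d: "d \<in> Cl D" "d' \<in> Cl D" "tgt2 D d = src2 D d'"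
  shows "fcl (Rfun C D) (vc (prodcat C D) (g',d') (g,d)) = sim_vc C D (fcl (Rfun C D) (g',d')) (fcl (Rfun C D) (g,d))"
  using CC.vc_cl[OF g] DD.vc_cl[OF d] CC.hcR[OF g(1)] DD.hcR[OF d(1)]
  by (simp add: sim_vc_def)

lemma R_hc:
  assumes g: "g \<in> Cl C" "g' \<in> Cl C" "cod1 C (src2 C g) = dom1 C (src2 C g')"
    and d: "d \<in> Cl D" "d' \<in> Cl D" "cod1 D (src2 D d) = dom1 D (src2 D d')"
  shows "sim_vc C D (fcomp (Rfun C D) (tgt2 C g', tgt2 D d') (tgt2 C g, tgt2 D d)) (sim_hc (fcl (Rfun C D) (g',d')) (fcl (Rfun C D) (g,d)))
       = sim_vc C D (fcl (Rfun C D) (hc C g' g, hc D d' d)) (fcomp (Rfun C D) (src2 C g', src2 D d') (src2 C g, src2 D d))"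
proof -
  note H1 = CC.hc_cl[OF g] and H2 = DD.hc_cl[OF d]
  note A1 = CC.cl_ar[OF g(1)] CC.cl_ar[OF g(2)] and A2 = DD.cl_ar[OF d(1)] DD.cl_ar[OF d(2)]
  have s1: "cmp C (src2 C g') (src2 C g) \<in> Ar C" "dom1 C (cmp C (src2 C g') (src2 C g)) = dom1 C (src2 C g)"
    using CC.cmp_ar A1 g(3) by auto
  have s2: "cmp D (src2 D d') (src2 D d) \<in> Ar D" "dom1 D (cmp D (src2 D d') (src2 D d)) = dom1 D (src2 D d)"
    using DD.cmp_ar A2 d(3) by auto
  have e1: "vc C (id2 C (cmp C (tgt2 C g') (tgt2 C g))) (hc C g' g) = hc C g' g"
    using CC.vc_unitL[of "hc C g' g"] H1 by simp
  have e2: "vc D (id2 D (cmp D (tgt2 D d') (tgt2 D d))) (hc D d' d) = hc D d' d"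
    using DD.vc_unitL[of "hc D d' d"] H2 by simp
  have f1: "vc C (hc C g' g) (id2 C (cmp C (src2 C g') (src2 C g))) = hc C g' g"
    using CC.vc_unitR[of "hc C g' g"] H1 by simp
  have f2: "vc D (hc D d' d) (id2 D (cmp D (src2 D d') (src2 D d))) = hc D d' d"
    using DD.vc_unitR[of "hc D d' d"] H2 by simp
  show ?thesis
    using H1 H2 CC.hcR[OF g(1)] DD.hcR[OF d(1)] CC.id2hcR[OF s1(1)] DD.id2hcR[OF s2(1)] s1 s2 e1 e2 f1 f2 A1 A2
    by (simp add: sim_vc_def sim_hc_def Rcmp)
qed

end

lemma Rcmp3: "sim_cmp (Rarr C D (c'',d'')) (sim_cmp (Rarr C D (c',d')) (Rarr C D (c,d))) =
   sim_cmp (sim_cmp (Rarr C D (c'',d'')) (Rarr C D (c',d'))) (Rarr C D (c,d))"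
  by (simp add: sim_cmp_def Rarr_def)

lemma hseg2'[simp]: "hseg C [a,b] x 0 (Suc (Suc 0)) = hc C b (hc C a (id2 C (idn C x)))" by (simp add: hseg_def)

context tc
begin
lemma assoc_cell:
  assumes "c \<in> Ar C" "c' \<in> Ar C" "c'' \<in> Ar C" "cod1 C c = dom1 C c'" "cod1 C c' = dom1 C c''"
  shows "vc C (id2 C (cmp C c'' (cmp C c' c))) (hc C (id2 C c'') (hc C (id2 C (cmp C c' c)) (id2 C (idn C (dom1 C c)))))
     = id2 C (cmp C c'' (cmp C c' c))"
    "vc C (id2 C (cmp C (cmp C c'' c') c)) (hc C (id2 C (cmp C c'' c')) (hc C (id2 C c) (id2 C (idn C (dom1 C c)))))
     = id2 C (cmp C (cmp C c'' c') c)"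
proof -
  have gf: "cmp C c' c \<in> Ar C" "dom1 C (cmp C c' c) = dom1 C c" "cod1 C (cmp C c' c) = dom1 C c''" using cmp_ar assms by auto
  have hg: "cmp C c'' c' \<in> Ar C" "dom1 C (cmp C c'' c') = cod1 C c" using cmp_ar assms by auto
  have x: "cmp C c'' (cmp C c' c) \<in> Ar C" using cmp_ar gf assms by auto
  have y: "cmp C (cmp C c'' c') c \<in> Ar C" using cmp_ar hg assms by auto
  show "vc C (id2 C (cmp C c'' (cmp C c' c))) (hc C (id2 C c'') (hc C (id2 C (cmp C c' c)) (id2 C (idn C (dom1 C c)))))
     = id2 C (cmp C c'' (cmp C c' c))"
    using id2hcR[OF gf(1)] gf hc_id2[OF gf(1) assms(3) gf(3)] vc_id2_id2[OF x] by simp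
  show "vc C (id2 C (cmp C (cmp C c'' c') c)) (hc C (id2 C (cmp C c'' c')) (hc C (id2 C c) (id2 C (idn C (dom1 C c)))))
     = id2 C (cmp C (cmp C c'' c') c)"
    using id2hcR[OF assms(1)] hc_id2[OF assms(1) hg(1)] hg vc_id2_id2[OF y] by simp
qed

lemma unit_cells:
  assumes c: "c \<in> Ar C"
  shows "vc C (id2 C (cmp C c (idn C (dom1 C c)))) (hc C (id2 C c) (hc C (id2 C (idn C (dom1 C c))) (id2 C (idn C (dom1 C c))))) = id2 C c"
    "vc C (id2 C (cmp C (idn C (cod1 C c)) c)) (hc C (id2 C (idn C (cod1 C c))) (hc C (id2 C c) (id2 C (idn C (dom1 C c))))) = id2 C c"
proof -
  have o: "dom1 C c \<in> Ob C" "cod1 C c \<in> Ob C" using ar_ob c by auto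
  note i1 = idn_ar[OF o(1)] and i2 = idn_ar[OF o(2)]
  show "vc C (id2 C (cmp C c (idn C (dom1 C c)))) (hc C (id2 C c) (hc C (id2 C (idn C (dom1 C c))) (id2 C (idn C (dom1 C c))))) = id2 C c"
    using id2hcR[of "idn C (dom1 C c)"] i1 id2hcR[OF c] cmp_unitR[OF c] vc_id2_id2[OF c] by simp
  show "vc C (id2 C (cmp C (idn C (cod1 C c)) c)) (hc C (id2 C (idn C (cod1 C c))) (hc C (id2 C c) (id2 C (idn C (dom1 C c))))) = id2 C c"
    using id2hcR[OF c] hc_id2[of c "idn C (cod1 C c)"] i2 c cmp_unitL[OF c] vc_id2_id2[OF c] by simp
qed
end

context tc2
begin

lemma R_assoc:
  assumes c: "c \<in> Ar C" "c' \<in> Ar C" "c'' \<in> Ar C" "cod1 C c = dom1 C c'" "cod1 C c' = dom1 C c''"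
    and d: "d \<in> Ar D" "d' \<in> Ar D" "d'' \<in> Ar D" "cod1 D d = dom1 D d'" "cod1 D d' = dom1 D d''"
  shows "sim_vc C D (fcomp (Rfun C D) (c'',d'') (cmp C c' c, cmp D d' d))
            (sim_hc (sim_id2 C D (Rarr C D (c'',d''))) (fcomp (Rfun C D) (c',d') (c,d)))
       = sim_vc C D (fcomp (Rfun C D) (cmp C c'' c', cmp D d'' d') (c,d))
            (sim_hc (fcomp (Rfun C D) (c'',d'') (c',d')) (sim_id2 C D (Rarr C D (c,d))))"
proof -
  have gf: "dom1 C (cmp C c' c) = dom1 C c" "dom1 D (cmp D d' d) = dom1 D d" using CC.cmp_ar[OF c(1,2,4)] DD.cmp_ar[OF d(1,2,4)] by auto
  show ?thesis
    using CC.assoc_cell[OF c] DD.assoc_cell[OF d] CC.cmp_assoc[OF c] DD.cmp_assoc[OF d] gf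
    by (simp add: sim_vc_def sim_hc_def sim_id2_def Rcmp sim_cmp_def Rarr_def numeral_eq_Suc)
qed

lemma R_units:
  assumes c: "c \<in> Ar C" and d: "d \<in> Ar D"
  shows "sim_vc C D (fcomp (Rfun C D) (c,d) (idn C (dom1 C c), idn D (dom1 D d)))
          (sim_hc (sim_id2 C D (Rarr C D (c,d))) (funit (Rfun C D) (dom1 C c, dom1 D d))) = sim_id2 C D (Rarr C D (c,d))"
    "sim_vc C D (fcomp (Rfun C D) (idn C (cod1 C c), idn D (cod1 D d)) (c,d))
          (sim_hc (funit (Rfun C D) (cod1 C c, cod1 D d)) (sim_id2 C D (Rarr C D (c,d)))) = sim_id2 C D (Rarr C D (c,d))"
proof -
  have o: "dom1 C c \<in> Ob C" "cod1 C c \<in> Ob C" "dom1 D d \<in> Ob D" "cod1 D d \<in> Ob D" using CC.ar_ob c DD.ar_ob d by auto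
  note i = CC.idn_ar[OF o(1)] CC.idn_ar[OF o(2)] DD.idn_ar[OF o(3)] DD.idn_ar[OF o(4)]
  show "sim_vc C D (fcomp (Rfun C D) (c,d) (idn C (dom1 C c), idn D (dom1 D d)))
          (sim_hc (sim_id2 C D (Rarr C D (c,d))) (funit (Rfun C D) (dom1 C c, dom1 D d))) = sim_id2 C D (Rarr C D (c,d))"
    using CC.unit_cells(1)[OF c] DD.unit_cells(1)[OF d] i CC.cmp_unitR[OF c] DD.cmp_unitR[OF d]
    by (simp add: sim_vc_def sim_hc_def sim_id2_def sim_idn_def sim_cmp_def Rarr_def numeral_eq_Suc)
  show "sim_vc C D (fcomp (Rfun C D) (idn C (cod1 C c), idn D (cod1 D d)) (c,d))
          (sim_hc (funit (Rfun C D) (cod1 C c, cod1 D d)) (sim_id2 C D (Rarr C D (c,d)))) = sim_id2 C D (Rarr C D (c,d))"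
    using CC.unit_cells(2)[OF c] DD.unit_cells(2)[OF d] i CC.cmp_unitL[OF c] DD.cmp_unitL[OF d]
    by (simp add: sim_vc_def sim_hc_def sim_id2_def sim_idn_def sim_cmp_def Rarr_def numeral_eq_Suc)
qed

end

context tc2
begin

lemma R_lax: "lax_functor (prodcat C D) (simcat C D) (Rfun C D)"
proof -
  have c1: "\<forall>x\<in>Ob (prodcat C D). fob (Rfun C D) x \<in> Ob (simcat C D)" by simp
  have c3: "\<forall>a\<in>Cl (prodcat C D). fcl (Rfun C D) a \<in> Cl (simcat C D) \<and> src2 (simcat C D) (fcl (Rfun C D) a) = far (Rfun C D) (src2 (prodcat C D) a) \<and> tgt2 (simcat C D) (fcl (Rfun C D) a) = far (Rfun C D) (tgt2 (prodcat C D) a)"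
    using R_fcl_cell by auto
  have c4: "\<forall>f\<in>Ar (prodcat C D). fcl (Rfun C D) (id2 (prodcat C D) f) = id2 (simcat C D) (far (Rfun C D) f)"
    using R_id2 by auto
  have c5: "\<forall>a\<in>Cl (prodcat C D). \<forall>b\<in>Cl (prodcat C D). tgt2 (prodcat C D) a = src2 (prodcat C D) b \<longrightarrow> fcl (Rfun C D) (vc (prodcat C D) b a) = vc (simcat C D) (fcl (Rfun C D) b) (fcl (Rfun C D) a)"
    using R_vc by auto
  have c6: "\<forall>x\<in>Ob (prodcat C D). funit (Rfun C D) x \<in> Cl (simcat C D) \<and> src2 (simcat C D) (funit (Rfun C D) x) = idn (simcat C D) (fob (Rfun C D) x) \<and>
        tgt2 (simcat C D) (funit (Rfun C D) x) = far (Rfun C D) (idn (prodcat C D) x)"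
    using R_funit_cell by auto
  have c7: "\<forall>f\<in>Ar (prodcat C D). \<forall>g\<in>Ar (prodcat C D). cod1 (prodcat C D) f = dom1 (prodcat C D) g \<longrightarrow>
        fcomp (Rfun C D) g f \<in> Cl (simcat C D) \<and> src2 (simcat C D) (fcomp (Rfun C D) g f) = cmp (simcat C D) (far (Rfun C D) g) (far (Rfun C D) f) \<and>
        tgt2 (simcat C D) (fcomp (Rfun C D) g f) = far (Rfun C D) (cmp (prodcat C D) g f)"
    using R_fcomp_cell by auto
  have c8: "\<forall>a\<in>Cl (prodcat C D). \<forall>b\<in>Cl (prodcat C D). cod1 (prodcat C D) (src2 (prodcat C D) a) = dom1 (prodcat C D) (src2 (prodcat C D) b) \<longrightarrow>
        vc (simcat C D) (fcomp (Rfun C D) (tgt2 (prodcat C D) b) (tgt2 (prodcat C D) a)) (hc (simcat C D) (fcl (Rfun C D) b) (fcl (Rfun C D) a))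
          = vc (simcat C D) (fcl (Rfun C D) (hc (prodcat C D) b a)) (fcomp (Rfun C D) (src2 (prodcat C D) b) (src2 (prodcat C D) a))"
    using R_hc by auto
  have c9: "\<forall>f\<in>Ar (prodcat C D). \<forall>g\<in>Ar (prodcat C D). \<forall>h\<in>Ar (prodcat C D). cod1 (prodcat C D) f = dom1 (prodcat C D) g \<longrightarrow> cod1 (prodcat C D) g = dom1 (prodcat C D) h \<longrightarrow>
        vc (simcat C D) (fcomp (Rfun C D) h (cmp (prodcat C D) g f)) (hc (simcat C D) (id2 (simcat C D) (far (Rfun C D) h)) (fcomp (Rfun C D) g f))
          = vc (simcat C D) (fcomp (Rfun C D) (cmp (prodcat C D) h g) f) (hc (simcat C D) (fcomp (Rfun C D) h g) (id2 (simcat C D) (far (Rfun C D) f)))"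
    using R_assoc by auto
  have c10: "\<forall>f\<in>Ar (prodcat C D).
        vc (simcat C D) (fcomp (Rfun C D) f (idn (prodcat C D) (dom1 (prodcat C D) f))) (hc (simcat C D) (id2 (simcat C D) (far (Rfun C D) f)) (funit (Rfun C D) (dom1 (prodcat C D) f))) = id2 (simcat C D) (far (Rfun C D) f) \<and>
        vc (simcat C D) (fcomp (Rfun C D) (idn (prodcat C D) (cod1 (prodcat C D) f)) f) (hc (simcat C D) (funit (Rfun C D) (cod1 (prodcat C D) f)) (id2 (simcat C D) (far (Rfun C D) f))) = id2 (simcat C D) (far (Rfun C D) f)"
    using R_units by auto
  show ?thesis unfolding lax_functor_def
    by (intro conjI c1 R_far c3 c4 c5 c6 c7 c8 c9 c10)
qed

end

lemma lcomp_simps[simp]: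
  "fob (lcomp Z G F) x = fob G (fob F x)" "far (lcomp Z G F) f = far G (far F f)" "fcl (lcomp Z G F) a = fcl G (fcl F a)"
  "funit (lcomp Z G F) x = vc Z (fcl G (funit F x)) (funit G (fob F x))"
  "fcomp (lcomp Z G F) g f = vc Z (fcl G (fcomp F g f)) (fcomp G (far F g) (far F f))"
  by (simp_all add: lcomp_def)

lemma lid_simps[simp]:
  "fob (lid X) x = x" "far (lid X) f = f" "fcl (lid X) a = a" "funit (lid X) x = id2 X (idn X x)"
  "fcomp (lid X) g f = id2 X (cmp X g f)"
  by (simp_all add: lid_def)

lemma eta_simp: "eta C D f = (f, Rarr C D (pcomp C (a_p f), pcomp D (a_q f)), [0, a_n f], [id2 C (pcomp C (a_p f))],
                [0, a_m f], [id2 D (pcomp D (a_q f))])"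
  by (simp add: eta_def)

context tc2
begin

lemma LR_eq: "lfun_eq (prodcat C D) (lcomp (prodcat C D) (Lfun C D) (Rfun C D)) (lid (prodcat C D))"
proof -
  have c1: "\<forall>x\<in>Ob (prodcat C D). fob (lcomp (prodcat C D) (Lfun C D) (Rfun C D)) x = fob (lid (prodcat C D)) x \<and> funit (lcomp (prodcat C D) (Lfun C D) (Rfun C D)) x = funit (lid (prodcat C D)) x"
  proof (intro ballI conjI)
    fix x assume "x \<in> Ob (prodcat C D)"
    then obtain x1 x2 where x: "x = (x1,x2)" "x1 \<in> Ob C" "x2 \<in> Ob D" by auto
    note i = CC.idn_ar[OF x(2)] DD.idn_ar[OF x(3)]
    show "fob (lcomp (prodcat C D) (Lfun C D) (Rfun C D)) x = fob (lid (prodcat C D)) x" by simp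
    show "funit (lcomp (prodcat C D) (Lfun C D) (Rfun C D)) x = funit (lid (prodcat C D)) x"
      using x i CC.id2hcR[of "idn C x1"] DD.id2hcR[of "idn D x2"] CC.vc_id2_id2[of "idn C x1"] DD.vc_id2_id2[of "idn D x2"]
      by simp
  qed
  have c2: "\<forall>f\<in>Ar (prodcat C D). far (lcomp (prodcat C D) (Lfun C D) (Rfun C D)) f = far (lid (prodcat C D)) f"
    using CC.cmp_unitR DD.cmp_unitR by auto
  have c3: "\<forall>a\<in>Cl (prodcat C D). fcl (lcomp (prodcat C D) (Lfun C D) (Rfun C D)) a = fcl (lid (prodcat C D)) a"
    using CC.hcR DD.hcR by auto
  have c4: "\<forall>f\<in>Ar (prodcat C D). \<forall>g\<in>Ar (prodcat C D). cod1 (prodcat C D) f = dom1 (prodcat C D) g \<longrightarrow>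
      fcomp (lcomp (prodcat C D) (Lfun C D) (Rfun C D)) g f = fcomp (lid (prodcat C D)) g f"
  proof (intro ballI impI)
    fix f g assume f: "f \<in> Ar (prodcat C D)" and g: "g \<in> Ar (prodcat C D)" and fg: "cod1 (prodcat C D) f = dom1 (prodcat C D) g"
    obtain c d where cd: "f = (c,d)" "c \<in> Ar C" "d \<in> Ar D" using f by auto
    obtain c' d' where cd': "g = (c',d')" "c' \<in> Ar C" "d' \<in> Ar D" using g by auto
    have l: "cod1 C c = dom1 C c'" "cod1 D d = dom1 D d'" using fg cd cd' by auto
    note K1 = CC.cmp_ar[OF cd(2) cd'(2) l(1)] and K2 = DD.cmp_ar[OF cd(3) cd'(3) l(2)]
    show "fcomp (lcomp (prodcat C D) (Lfun C D) (Rfun C D)) g f = fcomp (lid (prodcat C D)) g f"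
      using cd cd' K1 K2 CC.id2_cl[of "cmp C c' c"] DD.id2_cl[of "cmp D d' d"] CC.id2hcR[of "cmp C c' c"] DD.id2hcR[of "cmp D d' d"]
        CC.vc_id2_id2[of "cmp C c' c"] DD.vc_id2_id2[of "cmp D d' d"] CC.cmp_unitR DD.cmp_unitR
      by (simp add: Rcmp)
  qed
  show ?thesis unfolding lfun_eq_def by (intro conjI c1 c2 c3 c4)
qed

lemma eta_cell:
  assumes f: "f \<in> sim_arr C D"
  shows "eta C D f \<in> sim_cell C D"
proof -
  obtain n p r m q s where fe: "f = (n,p,r,m,q,s)" by (cases f) auto
  have F: "is_path C n p" "is_path D m q" "shuffle n m r s" using sim_arrD[OF f] fe by auto
  note P1 = CC.pcomp_props[OF F(1)] and P2 = DD.pcomp_props[OF F(2)]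
  have r: "length r = Suc (n+m)" "r!0 = 0" "r!(n+m) = n" "length s = Suc (n+m)" "s!0 = 0" "s!(n+m) = m"
    using F(3) by (auto simp: shuffle_def is_dmap_def)
  have mm: "\<forall>i\<le>1 + 1. Min (preim r ([0,n] ! ([0,0,1] ! i))) \<le> Max (preim s ([0,m] ! ([0,1,1] ! i)))"
  proof (intro allI impI)
    fix i :: nat assume "i \<le> 1 + 1"
    then consider "i = 0" | "i = 1" | "i = 2" using le2_cases by blast
    then show "Min (preim r ([0,n] ! ([0,0,1] ! i))) \<le> Max (preim s ([0,m] ! ([0,1,1] ! i)))"
    proof cases
      case 1 then show ?thesis using r by (intro minmax[where a=0 and b=0]) simp_all
    next
      case 2 then show ?thesis using r by (intro minmax[where a=0 and b="n+m"]) simp_all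
    next
      case 3 then show ?thesis using r by (intro minmax[where a="n+m" and b="n+m"]) (simp_all add: numeral_eq_Suc)
    qed
  qed
  have pl: "length (snd p) = n" "length (snd q) = m" using CC.path_facts(3)[OF F(1)] DD.path_facts(3)[OF F(2)] by auto
  have ip1: "icon_path C p [0,n] [id2 C (pcomp C p)] (dom1 C (pcomp C p), [pcomp C p])"
    using P1(1) CC.id2_cl[of "pcomp C p"] pl by (auto simp: icon_path_def le_Suc_eq pcomp_def pobj_def)
  have ip2: "icon_path D q [0,m] [id2 D (pcomp D q)] (dom1 D (pcomp D q), [pcomp D q])"
    using P2(1) DD.id2_cl[of "pcomp D q"] pl by (auto simp: icon_path_def le_Suc_eq pcomp_def pobj_def)
  show ?thesis
    using f fe Rarr_arr[of "pcomp C p" "pcomp D q"] P1(1) P2(1) mm ip1 ip2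
    by (simp add: sim_cell_def is_dmap_def sim_dom_def sim_cod_def eta_simp)
qed

end

context tc2
begin

lemma eta_nat:
  assumes a: "a \<in> sim_cell C D"
  shows "sim_vc C D (fcl (Rfun C D) (fcl (Lfun C D) a)) (eta C D (c_src a)) = sim_vc C D (eta C D (c_tgt a)) a"
proof -
  note S = sim_cellD[OF a]
  note I1 = CC.icon_full[of "a_n (c_src a)" "a_p (c_src a)" "a_n (c_tgt a)" "a_p (c_tgt a)" "c_xi a" "c_al a"]
  note I2 = DD.icon_full[of "a_m (c_src a)" "a_q (c_src a)" "a_m (c_tgt a)" "a_q (c_tgt a)" "c_rho a" "c_be a"]
  let ?g = "hseg C (c_al a) (fst (a_p (c_tgt a))) 0 (a_n (c_tgt a))"
  let ?d = "hseg D (c_be a) (fst (a_q (c_tgt a))) 0 (a_m (c_tgt a))"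
  have g: "?g \<in> Cl C" "src2 C ?g = pcomp C (a_p (c_src a))" "tgt2 C ?g = pcomp C (a_p (c_tgt a))" using I1 S by auto
  have d: "?d \<in> Cl D" "src2 D ?d = pcomp D (a_q (c_src a))" "tgt2 D ?d = pcomp D (a_q (c_tgt a))" using I2 S by auto
  note P = CC.pcomp_props(1)[of "a_n (c_src a)" "a_p (c_src a)"] DD.pcomp_props(1)[of "a_m (c_src a)" "a_q (c_src a)"]
  have x1: "c_xi a ! 0 = 0" "c_xi a ! a_n (c_tgt a) = a_n (c_src a)" using S by (auto simp: is_dmap_def)
  have x2: "c_rho a ! 0 = 0" "c_rho a ! a_m (c_tgt a) = a_m (c_src a)" using S by (auto simp: is_dmap_def)
  have e1: "vc C ?g (id2 C (pcomp C (a_p (c_src a)))) = ?g" using CC.vc_unitR[OF g(1)] g by simp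
  have e2: "vc D ?d (id2 D (pcomp D (a_q (c_src a)))) = ?d" using DD.vc_unitR[OF d(1)] d by simp
  have f1: "vc C (id2 C (pcomp C (a_p (c_tgt a)))) ?g = ?g" using CC.vc_unitL[OF g(1)] g by simp
  have f2: "vc D (id2 D (pcomp D (a_q (c_tgt a)))) ?d = ?d" using DD.vc_unitL[OF d(1)] d by simp
  show ?thesis
    using g d P S x1 x2 e1 e2 f1 f2 CC.id2hcR[of "pcomp C (a_p (c_src a))"] DD.id2hcR[of "pcomp D (a_q (c_src a))"]
    by (simp add: sim_vc_def eta_simp pobj_def)
qed

end

context tc
begin
lemma hseg_id2_concat:
  assumes p: "is_path C n p" and p': "is_path C n' p'" and o: "fst p' = pobj C p n"
  shows "hseg C (map (id2 C) (snd p @ snd p')) (fst p) 0 (n + n') = id2 C (cmp C (pcomp C p') (pcomp C p))"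
proof -
  have ok: "A.chainok (fst p) (snd p @ snd p') (pobj C p' n')"
    using A.chainok_append pcomp_props(3)[OF p] pcomp_props(3)[OF p'] o by auto
  have "hseg C (map (id2 C) (snd p @ snd p')) (fst p) 0 (n + n') = H.chain (fst p) (map (id2 C) (snd p @ snd p'))"
    using path_facts(3)[OF p] path_facts(3)[OF p'] by (simp add: hseg_eq seg_all)
  also have "\<dots> = id2 C (A.chain (fst p) (snd p @ snd p'))" using H_id2[OF ok] .
  also have "A.chain (fst p) (snd p @ snd p') = cmp C (pcomp C p') (pcomp C p)"
    using A.chain_append pcomp_props(3)[OF p] pcomp_props(3)[OF p'] o pcomp_props(2)[OF p] pcomp_props(2)[OF p'] by simp
  finally show ?thesis .
qed
end

context tc2
begin

lemma eta_unit:
  assumes x: "x1 \<in> Ob C" "x2 \<in> Ob D"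
  shows "sim_vc C D (eta C D (sim_idn (x1,x2))) (sim_id2 C D (sim_idn (x1,x2)))
     = sim_vc C D (fcl (Rfun C D) (id2 C (idn C x1), id2 D (idn D x2))) (funit (Rfun C D) (x1,x2))"
proof -
  note i = CC.idn_ar[OF x(1)] DD.idn_ar[OF x(2)]
  show ?thesis
    using i CC.id2_cl[of "idn C x1"] DD.id2_cl[of "idn D x2"] CC.id2hcR[of "idn C x1"] DD.id2hcR[of "idn D x2"]
      CC.vc_id2_id2[of "idn C x1"] DD.vc_id2_id2[of "idn D x2"]
    by (simp add: sim_vc_def eta_simp sim_id2_def sim_idn_def)
qed

lemma eta_comp:
  assumes f: "f \<in> sim_arr C D" and g: "g \<in> sim_arr C D" and fg: "sim_cod C D f = sim_dom C D g"
  shows "sim_vc C D (eta C D (sim_cmp g f)) (sim_id2 C D (sim_cmp g f))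
     = sim_vc C D (sim_vc C D (fcl (Rfun C D) (fcomp (Lfun C D) g f)) (fcomp (Rfun C D) (far (Lfun C D) g) (far (Lfun C D) f)))
          (sim_hc (eta C D g) (eta C D f))"
proof -
  note Lk = link[OF f g fg]
  note F = sim_arrD[OF f] and G = sim_arrD[OF g]
  note PF = CC.pcomp_props(1)[of "a_n f" "a_p f"] DD.pcomp_props(1)[of "a_m f" "a_q f"]
  note PG = CC.pcomp_props(1)[of "a_n g" "a_p g"] DD.pcomp_props(1)[of "a_m g" "a_q g"]
  let ?X = "cmp C (pcomp C (a_p g)) (pcomp C (a_p f))" and ?Y = "cmp D (pcomp D (a_q g)) (pcomp D (a_q f))"
  have K1: "?X \<in> Ar C" "dom1 C ?X = fst (a_p f)" using CC.cmp_ar PF PG F G Lk by auto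
  have K2: "?Y \<in> Ar D" "dom1 D ?Y = fst (a_q f)" using DD.cmp_ar PF PG F G Lk by auto
  have e: "pcomp C (fst (a_p f), snd (a_p f) @ snd (a_p g)) = ?X" "pcomp D (fst (a_q f), snd (a_q f) @ snd (a_q g)) = ?Y"
    using Lk(5) by simp_all
  have h1: "hseg C (map (id2 C) (snd (a_p f) @ snd (a_p g))) (fst (a_p f)) 0 (a_n f + a_n g) = id2 C ?X"
    using CC.hseg_id2_concat F G Lk by blast
  have h2: "hseg D (map (id2 D) (snd (a_q f) @ snd (a_q g))) (fst (a_q f)) 0 (a_m f + a_m g) = id2 D ?Y"
    using DD.hseg_id2_concat F G Lk by blast
  have h3: "hc C (id2 C (pcomp C (a_p g))) (hc C (id2 C (pcomp C (a_p f))) (id2 C (idn C (fst (a_p f))))) = id2 C ?X"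
    using CC.id2hcR[of "pcomp C (a_p f)"] PF F CC.hc_id2[of "pcomp C (a_p f)" "pcomp C (a_p g)"] PG G Lk by simp
  have h4: "hc D (id2 D (pcomp D (a_q g))) (hc D (id2 D (pcomp D (a_q f))) (id2 D (idn D (fst (a_q f))))) = id2 D ?Y"
    using DD.id2hcR[of "pcomp D (a_q f)"] PF F DD.hc_id2[of "pcomp D (a_q f)" "pcomp D (a_q g)"] PG G Lk by simp
  have dP: "dom1 C (pcomp C (a_p f)) = fst (a_p f)" "dom1 D (pcomp D (a_q f)) = fst (a_q f)" using PF F by auto
  have nth: "[0..<Suc (a_n f + a_n g)] ! (a_n f + a_n g) = a_n f + a_n g" "[0..<Suc (a_m f + a_m g)] ! (a_m f + a_m g) = a_m f + a_m g"
    by (simp_all del: upt_Suc)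
  show ?thesis
    using K1 K2 e h1 h2 h3 h4 nth dP CC.id2_cl[OF K1(1)] DD.id2_cl[OF K2(1)] CC.id2hcR[OF K1(1)] DD.id2hcR[OF K2(1)]
      CC.vc_id2_id2[OF K1(1)] DD.vc_id2_id2[OF K2(1)]
    by (simp add: sim_vc_def eta_simp sim_id2_def sim_hc_def Rcmp del: upt_Suc)
qed

end

context tc2
begin

lemma eta_icon: "icon (simcat C D) (simcat C D) (lid (simcat C D)) (lcomp (simcat C D) (Rfun C D) (Lfun C D)) (eta C D)"
proof -
  have c1: "\<forall>x\<in>Ob (simcat C D). fob (lid (simcat C D)) x = fob (lcomp (simcat C D) (Rfun C D) (Lfun C D)) x" by simp
  have c2: "\<forall>f\<in>Ar (simcat C D). eta C D f \<in> Cl (simcat C D) \<and> src2 (simcat C D) (eta C D f) = far (lid (simcat C D)) f \<and> tgt2 (simcat C D) (eta C D f) = far (lcomp (simcat C D) (Rfun C D) (Lfun C D)) f"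
    using eta_cell by (simp add: eta_simp)
  have c3: "\<forall>a\<in>Cl (simcat C D). vc (simcat C D) (fcl (lcomp (simcat C D) (Rfun C D) (Lfun C D)) a) (eta C D (src2 (simcat C D) a)) = vc (simcat C D) (eta C D (tgt2 (simcat C D) a)) (fcl (lid (simcat C D)) a)"
  proof (intro ballI)
    fix a assume "a \<in> Cl (simcat C D)"
    then have a: "a \<in> sim_cell C D" by simp
    obtain g d where gd: "fcl (Lfun C D) a = (g,d)" by (cases "fcl (Lfun C D) a") auto
    show "vc (simcat C D) (fcl (lcomp (simcat C D) (Rfun C D) (Lfun C D)) a) (eta C D (src2 (simcat C D) a)) = vc (simcat C D) (eta C D (tgt2 (simcat C D) a)) (fcl (lid (simcat C D)) a)"
      using eta_nat[OF a] by simp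
  qed
  have c4: "\<forall>x\<in>Ob (simcat C D). vc (simcat C D) (eta C D (idn (simcat C D) x)) (funit (lid (simcat C D)) x) = funit (lcomp (simcat C D) (Rfun C D) (Lfun C D)) x"
  proof (intro ballI)
    fix x assume "x \<in> Ob (simcat C D)"
    then obtain x1 x2 where x: "x = (x1,x2)" "x1 \<in> Ob C" "x2 \<in> Ob D" by auto
    show "vc (simcat C D) (eta C D (idn (simcat C D) x)) (funit (lid (simcat C D)) x) = funit (lcomp (simcat C D) (Rfun C D) (Lfun C D)) x"
      using eta_unit[OF x(2,3)] x by simp
  qed
  have c5: "\<forall>f\<in>Ar (simcat C D). \<forall>g\<in>Ar (simcat C D). cod1 (simcat C D) f = dom1 (simcat C D) g \<longrightarrow>
        vc (simcat C D) (eta C D (cmp (simcat C D) g f)) (fcomp (lid (simcat C D)) g f) = vc (simcat C D) (fcomp (lcomp (simcat C D) (Rfun C D) (Lfun C D)) g f) (hc (simcat C D) (eta C D g) (eta C D f))"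
    using eta_comp by simp
  show ?thesis unfolding icon_def by (intro conjI c1 c2 c3 c4 c5)
qed

lemma conj5: "\<forall>f\<in>Ar (simcat C D). fcl (Lfun C D) (eta C D f) = id2 (prodcat C D) (far (Lfun C D) f)"
proof
  fix f assume "f \<in> Ar (simcat C D)"
  then have F: "is_path C (a_n f) (a_p f)" "is_path D (a_m f) (a_q f)" using sim_arrD[of f C D] by auto
  note P = CC.pcomp_props(1)[OF F(1)] DD.pcomp_props(1)[OF F(2)]
  show "fcl (Lfun C D) (eta C D f) = id2 (prodcat C D) (far (Lfun C D) f)"
    using CC.id2hcR[of "pcomp C (a_p f)"] DD.id2hcR[of "pcomp D (a_q f)"] P by (simp add: eta_simp)
qed

lemma conj6: "\<forall>g\<in>Ar (prodcat C D). eta C D (far (Rfun C D) g) = id2 (simcat C D) (far (Rfun C D) g)"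
  using CC.cmp_unitR DD.cmp_unitR by (auto simp: eta_simp sim_id2_def Rarr_def)

end

theorem mainTheorem12:
  fixes C :: "('o1,'a1,'b1) tcat" and D :: "('o2,'a2,'b2) tcat"
  assumes "twocat C" and "twocat D"
  shows "strict_functor (simcat C D) (prodcat C D) (Lfun C D)
       \<and> lax_functor (prodcat C D) (simcat C D) (Rfun C D)
       \<and> lfun_eq (prodcat C D) (lcomp (prodcat C D) (Lfun C D) (Rfun C D)) (lid (prodcat C D))
       \<and> icon (simcat C D) (simcat C D) (lid (simcat C D))
              (lcomp (simcat C D) (Rfun C D) (Lfun C D)) (eta C D)
       \<and> (\<forall>f\<in>Ar (simcat C D). fcl (Lfun C D) (eta C D f) = id2 (prodcat C D) (far (Lfun C D) f))
       \<and> (\<forall>g\<in>Ar (prodcat C D). eta C D (far (Rfun C D) g) = id2 (simcat C D) (far (Rfun C D) g))"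
proof -
  interpret tc2 C D by (unfold_locales; fact assms)
  show ?thesis using L_strict R_lax LR_eq eta_icon conj5 conj6 by blast
qed

end
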